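(* Consider the D-EX$(\zeta_n)$ model described in the context, and suppose $\lim_{n\to\infty}\zeta_n=\zeta\in(0,1)$. Then for every $z\in D_\zeta$, \[ \lim_{n\to\infty}\frac{V_n(z)}{n}=\frac{t(z\mid\zeta)}{\alpha}-(1-\zeta)\quad\text{almost surely}, \qquad \lim_{n\to\infty}\frac{V_n(z)}{R_n(z)\vee 1}=1-\frac{\alpha(1-\zeta)}{t(z\mid\zeta)}\quad\text{almost surely}. \]
   Context: Setting (D-EX$(\zeta_n)$ model). Fix $\alpha\in(0,1)$. Let $\mathcal X,\mathcal Z,\mathcal T\subseteq\mathbb R$ be intervals. Let $Z$ be a real random variable with values in $\mathcal Z$, continuous c.d.f. $W_Z$ and distribution $P^Z$, and, for each $n$, let $X_1,\dots,X_n$ be independent real random variables with values in $\mathcal X$, independent of $Z$. Let $g:\mathcal X\times\mathcal Z\to\mathcal T$ be continuous, strictly increasing in its first argument and either strictly monotone or constant in its second argument; let $g_1$ be its inverse in the first argument ($g(x,z)=w$ iff $x=g_1(w,z)$) and, if $g$ is strictly monotone in the second argument, $g_2$ its inverse in the second argument ($g(x,z)=w$ iff $z=g_2(x,w)$). The test statistics are $T_i=g(X_i,Z)$ for the hypotheses $H_i:\vartheta_i=0$ versus $K_i:\vartheta_i>0$. When $H_i$ is true, $X_i$ has a continuous c.d.f. $W_X$ and $T_i$ has c.d.f. $W_T$. Given $Z=z$, the $p$-values are $p_i(z)=1-W_T(g(X_i,z))$. Define $F_\infty(t\mid z)=1-W_X\big(g_1(W_T^{-1}(1-t),z)\big)$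 for $t\in(0,1)$; it is assumed that for every $z\in\mathcal Z$, $F_\infty(\cdot\mid z)$ is continuous on $[0,1]$, $F_\infty(0\mid z)=0$ and $F_\infty(\cdot\mid z)$ is differentiable from the right at $0$. In the D-EX$(\zeta_n)$ model, for each $n$ exactly $n_0$ of the $n$ hypotheses are true, $\zeta_n=n_0/n$, and each of the remaining $n-n_0$ (false) hypotheses has $\vartheta_i=\infty$, in which case its $p$-value equals $0$ almost surely. Linear step-up procedure (LSU) at level $\alpha$: with ordered $p$-values $p_{1:n}\le\dots\le p_{n:n}$ let $m=\max\{i: p_{i:n}\le i\alpha/n\}$ and reject all $H_i$ with $p_i\le m\alpha/n$ (nothing if no such $i$ exists). $V_n$ is the number of rejected true hypotheses, $R_n$ the total number of rejections; $V_n(z),R_n(z)$ denote these quantities when $Z=z$ is given. Let $F_\infty(t\mid z,\zeta)=(1-\zeta)+\zeta F_\infty(t\mid z)$ and $t(z\mid\zeta)=\sup\{t\in[\alpha(1-\zeta),\alpha]: F_\infty(t\mid z,\zeta)=t/\alpha\}$. The point $t(z\mid\zeta)$ is called a largest crossing point (LCP) if there is $\epsilon>0$ with $F_\infty(t\mid z,\zeta)>t/\alpha$ for $t\in[t(z\mid\zeta)-\epsilon,t(z\mid\zeta))$ and $F_\infty(t\mid z,\zeta)<t/\alpha$ for $t\in(t(z\mid\zeta),t(z\mid\zeta)+\epsilon]$. $C_\zeta$ is the set of LCPs and $D_\zeta=\{z\in\mathcal Z: t(z\mid\zeta)\in C_\zeta\}$. Standing assumption: $P^Z(D_\zeta)=1$.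 *)

theory Defs
  imports "HOL-Probability.Probability"
begin

text \<open>Linear step-up procedure at level alpha applied to the p-values p 0, ..., p (n-1).
  lsu_num is m = max {i. p_(i:n) <= i alpha / n} (0 if there is no such i), where
  p_(i:n) is the i-th smallest p-value.\<close>
definition lsu_num :: "real \<Rightarrow> nat \<Rightarrow> (nat \<Rightarrow> real) \<Rightarrow> nat" where
  "lsu_num \<alpha> n p =
     (let ps = sort (map p [0..<n])
      in Max (insert 0 {k \<in> {1..n}. ps ! (k - 1) \<le> real k * \<alpha> / real n}))"

definition lsu_rejected :: "real \<Rightarrow> nat \<Rightarrow> (nat \<Rightarrow> real) \<Rightarrow> nat set" where
  "lsu_rejected \<alpha> n p =
     {i. i < n \<and> 0 < lsu_num \<alpha> n p \<and> p i \<le> real (lsu_num \<alpha> n p) * \<alpha> / real n}"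

definition cdf_inv :: "(real \<Rightarrow> real) \<Rightarrow> real \<Rightarrow> real" where
  "cdf_inv W u = Inf {w. u \<le> W w}"

definition pvalue :: "(real \<Rightarrow> real) \<Rightarrow> (real \<Rightarrow> real \<Rightarrow> real) \<Rightarrow> real \<Rightarrow> real \<Rightarrow> real" where
  "pvalue WT g x z = 1 - WT (g x z)"

definition Finf :: "(real \<Rightarrow> real) \<Rightarrow> (real \<Rightarrow> real) \<Rightarrow> (real \<Rightarrow> real \<Rightarrow> real) \<Rightarrow> real \<Rightarrow> real \<Rightarrow> real" where
  "Finf WX WT g1 z t = 1 - WX (g1 (cdf_inv WT (1 - t)) z)"

definition Fmix :: "(real \<Rightarrow> real) \<Rightarrow> real \<Rightarrow> real \<Rightarrow> real" where
  "Fmix F \<zeta> t = (1 - \<zeta>) + \<zeta> * F t"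

definition tcross :: "real \<Rightarrow> (real \<Rightarrow> real) \<Rightarrow> real \<Rightarrow> real" where
  "tcross \<alpha> F \<zeta> = Sup {t \<in> {\<alpha> * (1 - \<zeta>)..\<alpha>}. Fmix F \<zeta> t = t / \<alpha>}"

definition is_LCP :: "real \<Rightarrow> (real \<Rightarrow> real) \<Rightarrow> real \<Rightarrow> bool" where
  "is_LCP \<alpha> F \<zeta> =
     (\<exists>\<epsilon>>0. (\<forall>t\<in>{tcross \<alpha> F \<zeta> - \<epsilon>..<tcross \<alpha> F \<zeta>}. Fmix F \<zeta> t > t / \<alpha>) \<and>
            (\<forall>t\<in>{tcross \<alpha> F \<zeta><..tcross \<alpha> F \<zeta> + \<epsilon>}. Fmix F \<zeta> t < t / \<alpha>))"

definition Dset :: "real \<Rightarrow> (real \<Rightarrow> real \<Rightarrow> real) \<Rightarrow> real \<Rightarrow> real set \<Rightarrow> real set" where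
  "Dset \<alpha> F \<zeta> Zs = {z \<in> Zs. is_LCP \<alpha> (F z) \<zeta>}"

end

theory Submission
  imports Defs
begin

lemma sorted_nth_le_iff:
  fixes ps :: "real list"
  assumes "sorted ps" "j < length ps"
  shows "ps ! j \<le> x \<longleftrightarrow> j < length (filter (\<lambda>y. y \<le> x) ps)"
proof -
  have L: "length (filter (\<lambda>y. y \<le> x) ps) = card {i. i < length ps \<and> ps!i \<le> x}"
    by (rule length_filter_conv_card)
  show ?thesis
  proof
    assume h: "ps!j \<le> x"
    have "{..j} \<subseteq> {i. i < length ps \<and> ps!i \<le> x}"
      using sorted_nth_mono[OF assms(1)] assms(2) h by fastforce
    then have "card {..j} \<le> card {i. i < length ps \<and> ps!i \<le> x}"
      by (intro card_mono) auto
    then show "j < length (filter (\<lambda>y. y \<le> x) ps)" using L by simp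
  next
    assume h: "j < length (filter (\<lambda>y. y \<le> x) ps)"
    show "ps!j \<le> x"
    proof (rule ccontr)
      assume "\<not> ps!j \<le> x"
      then have "{i. i < length ps \<and> ps!i \<le> x} \<subseteq> {..<j}"
        using sorted_nth_mono[OF assms(1)] by (force simp: not_le)
      then have "card {i. i < length ps \<and> ps!i \<le> x} \<le> card {..<j}"
        by (intro card_mono) auto
      then show False using h L by simp
    qed
  qed
qed

lemma length_filter_sort: "length (filter P (sort xs)) = length (filter P xs)"
  by (metis mset_filter mset_sort size_mset)

lemma lsu_num_alt:
  "lsu_num \<alpha> n p = Max (insert 0 {k\<in>{1..n}. k \<le> card {i. i < n \<and> p i \<le> real k * \<alpha> / real n}})"
proof -
  define ps where "ps = sort (map p [0..<n])"
  have s: "sorted ps" and len: "length ps = n" by (auto simp: ps_def)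
  have cnt: "length (filter (\<lambda>y. y \<le> x) ps) = card {i. i < n \<and> p i \<le> x}" for x
    unfolding ps_def length_filter_sort
    by (simp add: length_filter_conv_card) (rule arg_cong[where f=card], auto)
  have "{k\<in>{1..n}. ps ! (k - 1) \<le> real k * \<alpha> / real n} =
        {k\<in>{1..n}. k \<le> card {i. i < n \<and> p i \<le> real k * \<alpha> / real n}}"
  proof (intro Collect_cong conj_cong refl)
    fix k
    define x where "x = real k * \<alpha> / real n"
    assume k: "k \<in> {1..n}"
    have "ps!(k-1) \<le> x \<longleftrightarrow> k-1 < card {i. i < n \<and> p i \<le> x}"
      using sorted_nth_le_iff[OF s, of "k-1" x] cnt[of x] len k by auto
    then show "ps ! (k - 1) \<le> real k * \<alpha> / real n \<longleftrightarrow> k \<le> card {i. i < n \<and> p i \<le> real k * \<alpha> / real n}"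
      using k unfolding x_def by auto
  qed
  then show ?thesis unfolding lsu_num_def Let_def ps_def by simp
qed


lemma Fmix_cont:
  assumes "continuous_on A F" shows "continuous_on A (Fmix F \<zeta>)"
  unfolding Fmix_def[abs_def] by (intro continuous_intros assms)

lemma crossing_props:
  fixes \<alpha> \<zeta> :: real and F :: "real \<Rightarrow> real"
  assumes alpha: "0 < \<alpha>" "\<alpha> < 1" and zeta: "0 < \<zeta>" "\<zeta> < 1"
    and Fcont: "continuous_on {0<..<1} F"
    and Fbd: "\<And>t. t \<in> {0<..<1} \<Longrightarrow> 0 \<le> F t \<and> F t \<le> 1"
    and lcp: "is_LCP \<alpha> F \<zeta>"
  shows "\<alpha>*(1-\<zeta>) \<le> tcross \<alpha> F \<zeta>" "tcross \<alpha> F \<zeta> \<le> \<alpha>"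
    "Fmix F \<zeta> (tcross \<alpha> F \<zeta>) = tcross \<alpha> F \<zeta> / \<alpha>"
    "\<And>t. tcross \<alpha> F \<zeta> < t \<Longrightarrow> t \<le> \<alpha> \<Longrightarrow> Fmix F \<zeta> t < t/\<alpha>"
proof -
  define a where "a = \<alpha>*(1-\<zeta>)"
  define f where "f t = Fmix F \<zeta> t - t/\<alpha>" for t
  define S where "S = {t \<in> {a..\<alpha>}. f t = 0}"
  have a: "0 < a" "a < \<alpha>" using alpha zeta by (auto simp: a_def)
  have sub: "{a..\<alpha>} \<subseteq> {0<..<1}" using a alpha by auto
  have fcont: "continuous_on {0<..<1} f"
    unfolding f_def[abs_def] using alpha by (intro continuous_intros Fmix_cont Fcont) auto
  then have fcontK: "continuous_on {a..\<alpha>} f" using sub continuous_on_subset by blast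
  have ts: "tcross \<alpha> F \<zeta> = Sup S"
    unfolding tcross_def S_def f_def a_def by (rule arg_cong[where f=Sup]) auto
  have Fa: "0 \<le> F a" using Fbd[of a] a alpha by auto
  have "f a = \<zeta> * F a" using alpha by (simp add: f_def Fmix_def a_def)
  then have fa: "0 \<le> f a" using Fa zeta by simp
  have fb: "f \<alpha> \<le> 0"
    using Fbd[of \<alpha>] sub zeta alpha a by (auto simp: f_def Fmix_def)
  obtain x where x: "a \<le> x" "x \<le> \<alpha>" "f x = 0"
    using IVT2'[of f \<alpha> 0 a, OF fb fa _ fcontK] a by auto
  then have Sne: "S \<noteq> {}" unfolding S_def by auto
  have bdd: "bdd_above S" unfolding S_def by (auto intro: bdd_aboveI[of _ \<alpha>])
  have cl: "closed S" unfolding S_def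
    by (rule continuous_closed_preimage_constant[OF fcontK]) auto
  have tsS: "tcross \<alpha> F \<zeta> \<in> S" unfolding ts by (rule closed_contains_Sup[OF Sne bdd cl])
  then show "\<alpha>*(1-\<zeta>) \<le> tcross \<alpha> F \<zeta>" "tcross \<alpha> F \<zeta> \<le> \<alpha>"
    "Fmix F \<zeta> (tcross \<alpha> F \<zeta>) = tcross \<alpha> F \<zeta> / \<alpha>"
    unfolding S_def f_def a_def by auto
  obtain \<epsilon> where \<epsilon>: "\<epsilon> > 0"
    and right: "\<And>t. t\<in>{tcross \<alpha> F \<zeta><..tcross \<alpha> F \<zeta> + \<epsilon>} \<Longrightarrow> Fmix F \<zeta> t < t / \<alpha>"
    using lcp unfolding is_LCP_def by blast
  have upper: "t \<le> tcross \<alpha> F \<zeta>" if "t \<in> S" for t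
    unfolding ts by (rule cSup_upper[OF that bdd])
  fix t assume t: "tcross \<alpha> F \<zeta> < t" "t \<le> \<alpha>"
  show "Fmix F \<zeta> t < t/\<alpha>"
  proof (cases "t \<le> tcross \<alpha> F \<zeta> + \<epsilon>")
    case True then show ?thesis using right t by auto
  next
    case False
    define t1 where "t1 = tcross \<alpha> F \<zeta> + \<epsilon>"
    have t1: "t1 < t" "tcross \<alpha> F \<zeta> < t1" using False \<epsilon> by (auto simp: t1_def)
    have ft1: "f t1 < 0" using right[of t1] t1 by (auto simp: f_def t1_def)
    show ?thesis
    proof (rule ccontr)
      assume "\<not> Fmix F \<zeta> t < t / \<alpha>"
      then have "0 \<le> f t" by (auto simp: f_def)
      moreover have "continuous_on {t1..t} f"
        using continuous_on_subset[OF fcontK] t1 t tsS by (auto simp: S_def)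
      ultimately obtain y where y: "t1 \<le> y" "y \<le> t" "f y = 0"
        using IVT'[of f t1 0 t] ft1 t1 by auto
      then have "y \<in> S" using t1 t tsS by (auto simp: S_def)
      then show False using upper[of y] y t1 by auto
    qed
  qed
qed


lemma lsu_asymp:
  fixes \<alpha> \<zeta> :: real and F :: "real \<Rightarrow> real" and p :: "nat \<Rightarrow> nat \<Rightarrow> real"
    and I0 :: "nat \<Rightarrow> nat set"
  assumes alpha: "0 < \<alpha>" "\<alpha> < 1" and zeta: "0 < \<zeta>" "\<zeta> < 1"
    and I0_sub: "\<And>n. I0 n \<subseteq> {..<n}"
    and zeta_lim: "(\<lambda>n. real (card (I0 n)) / real n) \<longlonglongrightarrow> \<zeta>"
    and Fcont: "continuous_on {0<..<1} F"
    and Fbd: "\<And>t. t \<in> {0<..<1} \<Longrightarrow> 0 \<le> F t \<and> F t \<le> 1"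
    and pfalse: "\<And>n i. i < n \<Longrightarrow> i \<notin> I0 n \<Longrightarrow> p n i = 0"
    and conv: "\<And>t. t \<in> {0<..<1} \<Longrightarrow>
       (\<lambda>n. real (card {i\<in>I0 n. p n i \<le> t}) / real n) \<longlonglongrightarrow> \<zeta> * F t"
    and lcp: "is_LCP \<alpha> F \<zeta>"
  shows "(\<lambda>n. real (card (lsu_rejected \<alpha> n (p n) \<inter> I0 n)) / real n)
           \<longlonglongrightarrow> tcross \<alpha> F \<zeta> / \<alpha> - (1 - \<zeta>)"
    and "(\<lambda>n. real (card (lsu_rejected \<alpha> n (p n) \<inter> I0 n))
              / real (max (card (lsu_rejected \<alpha> n (p n))) 1))
           \<longlonglongrightarrow> 1 - \<alpha> * (1 - \<zeta>) / tcross \<alpha> F \<zeta>"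
proof -
  define ts where "ts = tcross \<alpha> F \<zeta>"
  define H where "H = Fmix F \<zeta>"
  note cp = crossing_props[OF alpha zeta Fcont Fbd lcp, folded ts_def H_def]
  have "0 < \<alpha>*(1-\<zeta>)" using alpha zeta by simp
  then have ts: "0 < ts" "ts < 1" using cp(1,2) alpha zeta by linarith+
  have Hts: "H ts = ts / \<alpha>" by (rule cp(3))
  obtain \<epsilon>0 where \<epsilon>0: "\<epsilon>0 > 0"
    and left: "\<And>t. t\<in>{ts - \<epsilon>0..<ts} \<Longrightarrow> H t > t / \<alpha>"
    using lcp unfolding is_LCP_def ts_def H_def by blast
  have Hcont: "continuous_on {0<..<1} H" unfolding H_def by (rule Fmix_cont[OF Fcont])
  define N where "N n s = card {i. i < n \<and> p n i \<le> s}" for n s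
  define T where "T n s = card {i\<in>I0 n. p n i \<le> s}" for n s
  define n0 where "n0 n = card (I0 n)" for n
  have finI: "finite (I0 n)" for n using I0_sub finite_subset by blast
  have Nmono: "N n s \<le> N n s'" if "s \<le> s'" for n s s'
    unfolding N_def using that by (intro card_mono) auto
  have Tmono: "T n s \<le> T n s'" if "s \<le> s'" for n s s'
    unfolding T_def using that finI by (intro card_mono) auto
  have NT: "real (N n s) = real n - real (n0 n) + real (T n s)" if "0 \<le> s" for n s
  proof -
    have U: "{i. i < n \<and> p n i \<le> s} = ({..<n} - I0 n) \<union> {i\<in>I0 n. p n i \<le> s}"
      using I0_sub[of n] pfalse[of _ n] that by auto
    have C1: "card ({..<n} - I0 n) = n - n0 n"
      unfolding n0_def using I0_sub[of n] by (simp add: card_Diff_subset finI)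
    have "card {i. i < n \<and> p n i \<le> s} = card ({..<n} - I0 n) + card {i\<in>I0 n. p n i \<le> s}"
      unfolding U by (rule card_Un_disjoint) (use finI[of n] in auto)
    then have "N n s = (n - n0 n) + T n s" unfolding N_def T_def C1 .
    have "card (I0 n) \<le> n" using card_mono[OF _ I0_sub[of n]] by simp
    then show ?thesis using \<open>card (I0 n) \<le> n\<close> \<open>N n s = (n - n0 n) + T n s\<close>
      by (simp add: n0_def of_nat_diff)
  qed
  have convN: "(\<lambda>n. real (N n t) / real n) \<longlonglongrightarrow> H t" if t: "t \<in> {0<..<1}" for t
  proof -
    have "(\<lambda>n. 1 - real (n0 n) / real n + real (T n t) / real n) \<longlonglongrightarrow> 1 - \<zeta> + \<zeta> * F t"
      by (intro tendsto_intros zeta_lim[folded n0_def] conv[OF t, folded T_def])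
    moreover have "\<forall>\<^sub>F n in sequentially. 1 - real (n0 n) / real n + real (T n t) / real n
        = real (N n t) / real n"
      using eventually_gt_at_top[of 0]
    proof eventually_elim
      case (elim n)
      then show ?case using NT[of t n] t by (simp add: field_simps)
    qed
    ultimately show ?thesis unfolding H_def Fmix_def by (rule Lim_transform_eventually)
  qed
  define m where "m n = lsu_num \<alpha> n (p n)" for n
  define K where "K n = {k\<in>{1..n}. k \<le> N n (real k * \<alpha> / real n)}" for n
  have m_alt: "m n = Max (insert 0 (K n))" for n
    unfolding m_def K_def N_def by (rule lsu_num_alt)
  have finK: "finite (K n)" for n unfolding K_def by auto
  have m_ge: "k \<le> m n" if "k \<in> K n" for k n
    unfolding m_alt using finK that by auto
  have m_le: "m n \<le> n" for n
    unfolding m_alt using finK by (subst Max_le_iff) (auto simp: K_def)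
  have m_in: "m n \<in> K n" if "0 < m n" for n
  proof -
    have "m n \<in> insert 0 (K n)" unfolding m_alt using finK by (intro Max_in) auto
    then show ?thesis using that by auto
  qed
  define \<tau> where "\<tau> n = real (m n) * \<alpha> / real n" for n
  have \<tau>_le: "\<tau> n \<le> \<alpha>" for n
  proof (cases "n = 0")
    case True then show ?thesis using alpha by (simp add: \<tau>_def)
  next
    case False
    have "real (m n) * \<alpha> \<le> real n * \<alpha>" using m_le[of n] alpha by (intro mult_right_mono) auto
    then show ?thesis using False by (simp add: \<tau>_def field_simps)
  qed
  have \<tau>_nonneg: "0 \<le> \<tau> n" for n using alpha by (simp add: \<tau>_def)
  have lower: "\<forall>\<^sub>F n in sequentially. ts - \<epsilon> < \<tau> n \<and> 0 < m n" if \<epsilon>: "\<epsilon> > 0" for \<epsilon>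
  proof -
    define r where "r = ts - min \<epsilon> (min \<epsilon>0 ts) / 2"
    have r: "ts - \<epsilon> < r" "r < ts" "ts - \<epsilon>0 \<le> r" "0 < r"
      using \<epsilon> \<epsilon>0 ts by (auto simp: r_def)
    have r1: "r \<in> {0<..<1}" using r ts by auto
    have Hr: "H r > r / \<alpha>" using left[of r] r by auto
    define \<delta> where "\<delta> = H r - r / \<alpha>"
    have \<delta>: "\<delta> > 0" using Hr by (simp add: \<delta>_def)
    have Hrd: "H r = r / \<alpha> + \<delta>" by (simp add: \<delta>_def)
    have lt: "r / \<alpha> + \<delta> / 2 < H r" unfolding Hrd using \<delta> by simp
    have ev1: "\<forall>\<^sub>F n in sequentially. r / \<alpha> + \<delta> / 2 < real (N n r) / real n"
      by (rule order_tendstoD(1)[OF convN[OF r1] lt])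
    have ev2: "\<forall>\<^sub>F n in sequentially. 2 / \<delta> < real n"
      by (rule filterlim_at_top_dense[THEN iffD1, rule_format, OF filterlim_real_sequentially])
    show ?thesis using ev1 ev2 eventually_gt_at_top[of 0]
    proof eventually_elim
      case (elim n)
      then have npos: "real n > 0" by simp
      define k where "k = nat \<lceil>real n * r / \<alpha>\<rceil>"
      have nr: "0 < real n * r / \<alpha>" using npos r alpha by simp
      have k1: "real n * r / \<alpha> \<le> real k" unfolding k_def by linarith
      have k2: "real k < real n * r / \<alpha> + 1" unfolding k_def using nr by linarith
      have "r / \<alpha> < 1" using r cp(2) alpha by simp
      then have "real n * (r / \<alpha>) < real n * 1" using npos by (intro mult_strict_left_mono) auto
      then have "real n * r / \<alpha> < real n" by simp
      then have kn: "k \<le> n" unfolding k_def by (simp add: nat_le_iff ceiling_le_iff)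
      have "0 < real k" using k1 nr by linarith
      then have kpos: "1 \<le> k" by simp
      have rk: "r \<le> real k * \<alpha> / real n" using k1 npos alpha by (simp add: field_simps)
      have A: "real (N n r) > real n * (r / \<alpha> + \<delta> / 2)"
        using elim(1) npos by (simp add: field_simps)
      have A2: "real n * (r / \<alpha> + \<delta> / 2) = real n * r / \<alpha> + real n * \<delta> / 2"
        by (simp add: field_simps)
      have B: "real n * \<delta> / 2 > 1" using elim(2) \<delta> by (simp add: field_simps)
      have "real (N n r) > real k" using A A2 B k2 by linarith
      then have "k \<le> N n (real k * \<alpha> / real n)" using Nmono[OF rk, of n] by linarith
      then have "k \<in> K n" using kpos kn by (auto simp: K_def)
      then have km: "k \<le> m n" by (rule m_ge)
      then have "real k * \<alpha> / real n \<le> \<tau> n" using alpha npos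
        by (auto simp: \<tau>_def divide_right_mono)
      then show ?case using rk r km kpos by auto
    qed
  qed
  have upper: "\<forall>\<^sub>F n in sequentially. \<tau> n < ts + \<epsilon>" if \<epsilon>: "\<epsilon> > 0" for \<epsilon>
  proof (cases "\<alpha> < ts + \<epsilon>")
    case True
    have "\<tau> n < ts + \<epsilon>" for n using \<tau>_le[of n] True by linarith
    then show ?thesis by (intro always_eventually allI)
  next
    case False
    define r0 where "r0 = ts + \<epsilon>"
    define b where "b = (1 + \<alpha>) / 2"
    have r0: "ts < r0" "r0 \<le> \<alpha>" "0 < r0" using False \<epsilon> ts by (auto simp: r0_def)
    have b: "\<alpha> < b" "b < 1" using alpha by (auto simp: b_def)
    define f where "f t = t / \<alpha> - H t" for t
    have subK: "{r0..b} \<subseteq> {0<..<1}" using r0 b by auto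
    have fcont: "continuous_on {r0..b} f"
      unfolding f_def[abs_def] using alpha
      by (intro continuous_intros continuous_on_subset[OF Hcont subK]) auto
    have fpos: "f t > 0" if "t \<in> {r0..b}" for t
    proof (cases "t \<le> \<alpha>")
      case True then show ?thesis using cp(4)[of t, folded ts_def H_def] that r0
        by (auto simp: f_def)
    next
      case False
      have "F t \<le> 1" using Fbd[of t] that subK by auto
      then have "\<zeta> * F t \<le> \<zeta> * 1" using zeta by (intro mult_left_mono) auto
      then have "H t \<le> 1" by (simp add: H_def Fmix_def)
      moreover have "t / \<alpha> > 1" using False alpha by simp
      ultimately show ?thesis by (simp add: f_def)
    qed
    obtain xm where xm: "xm \<in> {r0..b}" "\<And>y. y \<in> {r0..b} \<Longrightarrow> f xm \<le> f y"
      using continuous_attains_inf[OF compact_Icc _ fcont] r0 b by fastforce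
    define \<eta> where "\<eta> = f xm"
    have \<eta>: "\<eta> > 0" using fpos[OF xm(1)] by (simp add: \<eta>_def)
    have fge: "f y \<ge> \<eta>" if "y \<in> {r0..b}" for y using xm(2)[OF that] by (simp add: \<eta>_def)
    define J :: nat where "J = nat \<lceil>2 * (b - r0) / (\<alpha> * \<eta>)\<rceil> + 1"
    define h where "h = (b - r0) / real J"
    have br0: "b - r0 > 0" using r0 b by simp
    have Jpos: "real J > 0" by (simp add: J_def)
    have h: "h > 0" using br0 Jpos by (simp add: h_def)
    have "2 * (b - r0) / (\<alpha> * \<eta>) \<le> real J" unfolding J_def by linarith
    then have "2 * (b - r0) \<le> real J * (\<alpha> * \<eta>)" using alpha \<eta> by (simp add: field_simps)
    then have hle: "h / \<alpha> \<le> \<eta> / 2" using Jpos alpha by (simp add: h_def field_simps)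
    define r where "r j = r0 + real j * h" for j :: nat
    have rJ: "r j \<in> {r0..b}" if "j \<le> J" for j
    proof -
      have "real j * h \<le> real J * h" using that h by (intro mult_right_mono) auto
      also have "real J * h = b - r0" using Jpos by (simp add: h_def)
      finally show ?thesis using h by (auto simp: r_def)
    qed
    have ev: "\<forall>\<^sub>F n in sequentially. \<forall>j\<in>{..J}. real (N n (r j)) / real n < H (r j) + \<eta> / 2"
    proof (rule eventually_ball_finite, simp, intro ballI)
      fix j assume "j \<in> {..J}"
      then have "r j \<in> {0<..<1}" using rJ[of j] subK by auto
      then show "\<forall>\<^sub>F n in sequentially. real (N n (r j)) / real n < H (r j) + \<eta> / 2"
        by (rule order_tendstoD(2)[OF convN]) (use \<eta> in simp)
    qed
    show ?thesis using ev eventually_gt_at_top[of 0]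
    proof eventually_elim
      case (elim n)
      then have npos: "real n > 0" by simp
      show ?case
      proof (rule ccontr)
        assume "\<not> \<tau> n < ts + \<epsilon>"
        then have t0: "r0 \<le> \<tau> n" by (simp add: r0_def)
        have mpos: "0 < m n"
        proof (rule ccontr)
          assume "\<not> 0 < m n" then have "\<tau> n = 0" by (simp add: \<tau>_def)
          then show False using t0 r0 by simp
        qed
        have mK: "m n \<le> N n (\<tau> n)" using m_in[OF mpos] by (simp add: K_def \<tau>_def)
        define j where "j = nat \<lceil>(\<tau> n - r0) / h\<rceil>"
        have q0: "0 \<le> (\<tau> n - r0) / h" using t0 h by simp
        have "(\<tau> n - r0) / h \<le> (b - r0) / h" using \<tau>_le[of n] b h by (intro divide_right_mono) auto
        also have "(b - r0) / h = real J" using h Jpos br0 by (simp add: h_def)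
        finally have jJ: "j \<le> J" unfolding j_def by (simp add: nat_le_iff ceiling_le_iff)
        have j1: "(\<tau> n - r0) / h \<le> real j" unfolding j_def using q0 by linarith
        have j2: "real j < (\<tau> n - r0) / h + 1" unfolding j_def using q0 by linarith
        have rj1: "\<tau> n \<le> r j" using j1 h by (simp add: r_def field_simps)
        have rj2: "r j < \<tau> n + h" using j2 h by (simp add: r_def field_simps)
        have "real (m n) \<le> real (N n (r j))" using mK Nmono[OF rj1, of n] by simp
        also have "real (N n (r j)) < real n * (H (r j) + \<eta> / 2)"
          using elim(1) jJ npos by (auto simp: field_simps)
        also have "H (r j) + \<eta> / 2 \<le> r j / \<alpha> - \<eta> / 2"
          using fge[OF rJ[OF jJ]] by (simp add: f_def)
        also have "r j / \<alpha> - \<eta> / 2 \<le> \<tau> n / \<alpha>"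
        proof -
          have "r j / \<alpha> \<le> (\<tau> n + h) / \<alpha>" using rj2 alpha by (intro divide_right_mono) auto
          then have X: "r j / \<alpha> \<le> \<tau> n / \<alpha> + h / \<alpha>" by (simp add: add_divide_distrib)
          show ?thesis using X hle by linarith
        qed
        finally have "real (m n) < real n * (\<tau> n / \<alpha>)" using npos by simp
        then show False using npos alpha by (simp add: \<tau>_def)
      qed
    qed
  qed
  have \<tau>_lim: "\<tau> \<longlonglongrightarrow> ts"
  proof (rule order_tendstoI)
    fix a assume "a < ts"
    then show "\<forall>\<^sub>F n in sequentially. a < \<tau> n"
      using lower[of "ts - a"] by (auto elim: eventually_mono)
  next
    fix a assume "ts < a"
    then show "\<forall>\<^sub>F n in sequentially. \<tau> n < a"
      using upper[of "a - ts"] by auto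
  qed
  have mpos_ev: "\<forall>\<^sub>F n in sequentially. 0 < m n" using lower[of 1] by (auto elim: eventually_mono)
  define V where "V n = card (lsu_rejected \<alpha> n (p n) \<inter> I0 n)" for n
  define R where "R n = card (lsu_rejected \<alpha> n (p n))" for n
  have rej: "lsu_rejected \<alpha> n (p n) = {i. i < n \<and> p n i \<le> \<tau> n}" if "0 < m n" for n
    using that unfolding lsu_rejected_def \<tau>_def m_def by auto
  have VT: "V n = T n (\<tau> n)" if "0 < m n" for n
  proof -
    have "lsu_rejected \<alpha> n (p n) \<inter> I0 n = {i\<in>I0 n. p n i \<le> \<tau> n}"
      using rej[OF that] I0_sub[of n] by auto
    then show ?thesis by (simp add: V_def T_def)
  qed
  have RN: "R n = N n (\<tau> n)" if "0 < m n" for n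
    using rej[OF that] by (simp add: R_def N_def)
  have Fts_cont: "isCont F ts"
    using continuous_on_interior[OF Fcont] ts by (simp add: interior_open)
  have Vlim: "(\<lambda>n. real (V n) / real n) \<longlonglongrightarrow> \<zeta> * F ts"
    unfolding tendsto_iff dist_real_def
  proof (intro allI impI)
    fix e :: real assume e: "e > 0"
    obtain d where d: "d > 0" "\<And>t. \<bar>t - ts\<bar> < d \<Longrightarrow> \<bar>F t - F ts\<bar> < e / 2"
      using Fts_cont[unfolded continuous_at_eps_delta] e unfolding dist_real_def
      by (metis half_gt_zero)
    define d' where "d' = min (d/2) (min (ts/2) ((1 - ts)/2))"
    have d'le: "d' \<le> d/2" "d' \<le> ts/2" "d' \<le> (1-ts)/2" unfolding d'_def by linarith+
    have "0 < d'" using d ts by (auto simp: d'_def)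
    moreover have "d' < d" using d'le d by linarith
    moreover have "ts - d' > 0" using d'le ts by linarith
    moreover have "ts + d' < 1"
    proof -
      have "d' * 2 \<le> 1 - ts" using d'le(3) by simp
      then show ?thesis using ts \<open>0 < d'\<close> by linarith
    qed
    ultimately have d': "0 < d'" "d' < d" "ts - d' > 0" "ts + d' < 1" by auto
    have a1: "ts - d' \<in> {0<..<1}" and a2: "ts + d' \<in> {0<..<1}" using d' ts by auto
    have F1: "\<bar>F (ts - d') - F ts\<bar> < e / 2" and F2: "\<bar>F (ts + d') - F ts\<bar> < e / 2"
      using d(2) d' by auto
    have e2: "e / 2 > 0" using e by simp
    have ev1: "\<forall>\<^sub>F n in sequentially. \<bar>real (T n (ts - d')) / real n - \<zeta> * F (ts - d')\<bar> < e / 2"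
      using conv[OF a1, folded T_def] e2 unfolding tendsto_iff dist_real_def by blast
    have ev2: "\<forall>\<^sub>F n in sequentially. \<bar>real (T n (ts + d')) / real n - \<zeta> * F (ts + d')\<bar> < e / 2"
      using conv[OF a2, folded T_def] e2 unfolding tendsto_iff dist_real_def by blast
    show "\<forall>\<^sub>F n in sequentially. \<bar>real (V n) / real n - \<zeta> * F ts\<bar> < e"
      using ev1 ev2 lower[OF d'(1)] upper[OF d'(1)] eventually_gt_at_top[of 0]
    proof eventually_elim
      case (elim n)
      then have npos: "real n > 0" by simp
      have "T n (ts - d') \<le> V n" using VT[of n] elim Tmono[of "ts - d'" "\<tau> n" n] by auto
      then have lo: "real (T n (ts - d')) / real n \<le> real (V n) / real n"
        using npos by (simp add: divide_right_mono)
      have "V n \<le> T n (ts + d')" using VT[of n] elim Tmono[of "\<tau> n" "ts + d'" n] by auto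
      then have hi: "real (V n) / real n \<le> real (T n (ts + d')) / real n"
        using npos by (simp add: divide_right_mono)
      have z1: "\<bar>\<zeta> * F (ts - d') - \<zeta> * F ts\<bar> < e / 2"
      proof -
        have "\<bar>\<zeta> * F (ts - d') - \<zeta> * F ts\<bar> = \<zeta> * \<bar>F (ts - d') - F ts\<bar>"
          using zeta by (simp add: abs_mult right_diff_distrib[symmetric])
        also have "\<dots> \<le> \<bar>F (ts - d') - F ts\<bar>" using zeta by (simp add: mult_left_le_one_le)
        finally show ?thesis using F1 by simp
      qed
      have z2: "\<bar>\<zeta> * F (ts + d') - \<zeta> * F ts\<bar> < e / 2"
      proof -
        have "\<bar>\<zeta> * F (ts + d') - \<zeta> * F ts\<bar> = \<zeta> * \<bar>F (ts + d') - F ts\<bar>"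
          using zeta by (simp add: abs_mult right_diff_distrib[symmetric])
        also have "\<dots> \<le> \<bar>F (ts + d') - F ts\<bar>" using zeta by (simp add: mult_left_le_one_le)
        finally show ?thesis using F2 by simp
      qed
      show ?case using lo hi elim(1,2) z1 z2 unfolding abs_less_iff by linarith
    qed
  qed
  have Vlim': "(\<lambda>n. real (V n) / real n) \<longlonglongrightarrow> ts / \<alpha> - (1 - \<zeta>)"
  proof -
    have "\<zeta> * F ts = ts / \<alpha> - (1 - \<zeta>)" using Hts by (simp add: H_def Fmix_def)
    then show ?thesis using Vlim by simp
  qed
  then show "(\<lambda>n. real (card (lsu_rejected \<alpha> n (p n) \<inter> I0 n)) / real n)
           \<longlonglongrightarrow> tcross \<alpha> F \<zeta> / \<alpha> - (1 - \<zeta>)" by (simp add: V_def ts_def)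
  have Rlim: "(\<lambda>n. real (R n) / real n) \<longlonglongrightarrow> ts / \<alpha>"
  proof -
    have "(\<lambda>n. 1 - real (n0 n) / real n + real (V n) / real n) \<longlonglongrightarrow> 1 - \<zeta> + (ts / \<alpha> - (1 - \<zeta>))"
      by (intro tendsto_intros zeta_lim[folded n0_def] Vlim')
    moreover have "\<forall>\<^sub>F n in sequentially. 1 - real (n0 n) / real n + real (V n) / real n
        = real (R n) / real n"
      using mpos_ev eventually_gt_at_top[of 0]
    proof eventually_elim
      case (elim n)
      then show ?case using NT[OF \<tau>_nonneg, of n] RN[of n] VT[of n] by (simp add: field_simps)
    qed
    ultimately show ?thesis by (auto intro: Lim_transform_eventually)
  qed
  have tsa: "ts / \<alpha> > 0" using ts alpha by simp
  have evR: "\<forall>\<^sub>F n in sequentially. 0 < real (R n) / real n" by (rule order_tendstoD(1)[OF Rlim tsa])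
  have "(\<lambda>n. (real (V n) / real n) / (real (R n) / real n)) \<longlonglongrightarrow> (ts / \<alpha> - (1 - \<zeta>)) / (ts / \<alpha>)"
    by (rule tendsto_divide[OF Vlim' Rlim]) (use ts alpha in simp)
  moreover have "\<forall>\<^sub>F n in sequentially. (real (V n) / real n) / (real (R n) / real n) =
      real (V n) / real (max (R n) 1)"
    using evR eventually_gt_at_top[of 0]
  proof eventually_elim
    case (elim n)
    then have "R n \<ge> 1" by (simp add: zero_less_divide_iff)
    then have "max (R n) 1 = R n" by simp
    then show ?case using elim by simp
  qed
  ultimately have "(\<lambda>n. real (V n) / real (max (R n) 1)) \<longlonglongrightarrow> (ts / \<alpha> - (1 - \<zeta>)) / (ts / \<alpha>)"
    by (rule Lim_transform_eventually)
  moreover have "(ts / \<alpha> - (1 - \<zeta>)) / (ts / \<alpha>) = 1 - \<alpha> * (1 - \<zeta>) / ts"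
    using ts alpha by (simp add: field_simps)
  ultimately show "(\<lambda>n. real (card (lsu_rejected \<alpha> n (p n) \<inter> I0 n))
              / real (max (card (lsu_rejected \<alpha> n (p n))) 1))
           \<longlonglongrightarrow> 1 - \<alpha> * (1 - \<zeta>) / tcross \<alpha> F \<zeta>"
    by (simp add: V_def R_def ts_def)
qed


lemma summable_exp_bound:
  fixes c :: real assumes "c > 0"
  shows "summable (\<lambda>n::nat. 2 * exp (- c * real n))"
proof -
  have "exp (- c * real n) = exp (- c) ^ n" for n
    by (metis exp_of_nat_mult mult.commute)
  moreover have "summable (\<lambda>n. exp (- c) ^ n)" using assms by (intro summable_geometric) simp
  ultimately show ?thesis by (intro summable_mult) simp
qed

lemma triangular_slln:
  fixes M :: "'a measure" and Y :: "nat \<Rightarrow> nat \<Rightarrow> 'a \<Rightarrow> real" and I :: "nat \<Rightarrow> nat set"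
  assumes M: "prob_space M"
    and finI: "\<And>n. finite (I n)" and cardI: "\<And>n. card (I n) \<le> n"
    and indep: "\<And>n. prob_space.indep_vars M (\<lambda>_. borel) (Y n) (I n)"
    and bnd: "\<And>n i \<omega>. i \<in> I n \<Longrightarrow> \<omega> \<in> space M \<Longrightarrow> Y n i \<omega> \<in> {0..1}"
    and ex: "\<And>n i. i \<in> I n \<Longrightarrow> prob_space.expectation M (Y n i) = c"
  shows "AE \<omega> in M. (\<lambda>n. (\<Sum>i\<in>I n. Y n i \<omega>) / real n - real (card (I n)) / real n * c)
                     \<longlonglongrightarrow> 0"
proof -
  interpret prob_space M by (rule M)
  have meas: "Y n i \<in> borel_measurable M" if "i \<in> I n" for n i
    using indep[of n] that unfolding indep_vars_def by auto
  define A where "A e n = {\<omega>\<in>space M. real n * e \<le> \<bar>(\<Sum>i\<in>I n. Y n i \<omega>) - real (card (I n)) * c\<bar>}"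
    for e :: real and n
  have Asets: "A e n \<in> sets M" for e n
    unfolding A_def using meas by measurable
  have Abound: "prob (A e n) \<le> 2 * exp (- (2 * e^2) * real n)" if e: "e > 0" for e n
  proof (cases "I n = {}")
    case True
    show ?thesis
    proof (cases "n = 0")
      case True
      have "prob (A e n) \<le> 1" by simp
      moreover have "1 \<le> 2 * exp (- (2 * e^2) * real n)" using True by simp
      ultimately show ?thesis by linarith
    next
      case False
      then have "real n * e > 0" using e by simp
      then have "A e n = {}" unfolding A_def using \<open>I n = {}\<close> by auto
      then show ?thesis by simp
    qed
  next
    case False
    have H: "Hoeffding_ineq M (I n) (Y n) (\<lambda>_. 0) (\<lambda>_. 1)"
      unfolding Hoeffding_ineq_def indep_interval_bounded_random_variables_def
        indep_interval_bounded_random_variables_axioms_def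
      using M finI indep bnd by (auto intro!: AE_I2)
    have pos: "0 < (\<Sum>i\<in>I n. ((\<lambda>_. 1::real) i - (\<lambda>_. 0) i)\<^sup>2)"
      using False finI[of n] by (simp add: card_gt_0_iff)
    have ne: "0 \<le> real n * e" using e by simp
    have h: "prob {x \<in> space M. real n * e \<le> \<bar>(\<Sum>i\<in>I n. Y n i x) - (\<Sum>i\<in>I n. expectation (Y n i))\<bar>}
        \<le> 2 * exp (- 2 * (real n * e)\<^sup>2 / (\<Sum>i\<in>I n. ((\<lambda>_. 1::real) i - (\<lambda>_. 0) i)\<^sup>2))"
      by (rule Hoeffding_ineq.Hoeffding_ineq_abs_ge[OF H ne pos])
    have s: "(\<Sum>i\<in>I n. expectation (Y n i)) = real (card (I n)) * c" using ex by simp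
    have cp: "real (card (I n)) > 0" using False finI[of n] by (simp add: card_gt_0_iff)
    have cn: "real (card (I n)) \<le> real n" using cardI[of n] by simp
    have "- 2 * (real n * e)\<^sup>2 / real (card (I n)) \<le> - (2 * e^2) * real n"
    proof -
      have "(2 * e^2) * real n * real (card (I n)) \<le> (2 * e^2) * real n * real n"
        using cn by (intro mult_left_mono) auto
      then have "(2 * e^2) * real n \<le> 2 * (real n * e)\<^sup>2 / real (card (I n))"
        using cp by (simp add: field_simps power2_eq_square)
      then show ?thesis by (simp add: field_simps)
    qed
    then have E: "exp (- 2 * (real n * e)\<^sup>2 / real (card (I n))) \<le> exp (- (2 * e^2) * real n)"
      by (subst exp_le_cancel_iff)
    have sq: "(\<Sum>i\<in>I n. ((\<lambda>_. 1::real) i - (\<lambda>_. 0) i)\<^sup>2) = real (card (I n))" by simp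
    have h': "prob (A e n) \<le> 2 * exp (- 2 * (real n * e)\<^sup>2 / real (card (I n)))"
      using h unfolding A_def s sq .
    show ?thesis using h' E by linarith
  qed
  have AE_e: "AE \<omega> in M. eventually (\<lambda>n. \<bar>(\<Sum>i\<in>I n. Y n i \<omega>) - real (card (I n)) * c\<bar> < real n * e) sequentially"
    if e: "e > 0" for e
  proof -
    have "summable (\<lambda>n. measure M (A e n))"
    proof (rule summable_comparison_test'[OF summable_exp_bound])
      show "0 < 2 * e^2" using e by simp
      show "norm (measure M (A e n)) \<le> 2 * exp (- (2 * e^2) * real n)" for n
        using Abound[OF e, of n] by simp
    qed
    then have "AE x in M. eventually (\<lambda>n. x \<in> space M - A e n) sequentially"
      by (intro borel_cantelli_AE1) (auto simp: Asets less_top[symmetric])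
    then show ?thesis
      by (rule AE_mp) (auto intro!: AE_I2 elim: eventually_mono simp: A_def not_le)
  qed
  have "AE \<omega> in M. \<forall>k::nat. eventually (\<lambda>n. \<bar>(\<Sum>i\<in>I n. Y n i \<omega>) - real (card (I n)) * c\<bar>
          < real n * (1 / real (Suc k))) sequentially"
    by (subst AE_all_countable) (intro allI AE_e, simp)
  then show ?thesis
  proof (rule AE_mp, intro AE_I2 impI)
    fix \<omega> assume h: "\<forall>k::nat. eventually (\<lambda>n. \<bar>(\<Sum>i\<in>I n. Y n i \<omega>) - real (card (I n)) * c\<bar>
          < real n * (1 / real (Suc k))) sequentially"
    show "(\<lambda>n. (\<Sum>i\<in>I n. Y n i \<omega>) / real n - real (card (I n)) / real n * c) \<longlonglongrightarrow> 0"
      unfolding tendsto_iff dist_real_def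
    proof (intro allI impI)
      fix e :: real assume e: "e > 0"
      obtain k :: nat where k: "1 / real (Suc k) < e"
        using e by (metis nat_approx_posE)
      show "\<forall>\<^sub>F n in sequentially. \<bar>(\<Sum>i\<in>I n. Y n i \<omega>) / real n - real (card (I n)) / real n * c - 0\<bar> < e"
        using h[rule_format, of k] eventually_gt_at_top[of 0]
      proof eventually_elim
        case (elim n)
        then have np: "real n > 0" by simp
        define S where "S = (\<Sum>i\<in>I n. Y n i \<omega>)"
        define C where "C = real (card (I n)) * c"
        have eq: "S / real n - real (card (I n)) / real n * c = (S - C) / real n"
          unfolding C_def diff_divide_distrib by simp
        have "\<bar>S - C\<bar> / real n < (real n * (1 / real (Suc k))) / real n"
          by (rule divide_strict_right_mono[OF elim(1)[folded S_def C_def] np])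
        then have "\<bar>(S - C) / real n\<bar> < 1 / real (Suc k)" using np by simp
        then have "\<bar>S / real n - real (card (I n)) / real n * c\<bar> < 1 / real (Suc k)"
          unfolding eq .
        then show ?case using k unfolding S_def by simp
      qed
    qed
  qed
qed


lemma conv_extend:
  fixes \<zeta> :: real and F :: "real \<Rightarrow> real" and T :: "nat \<Rightarrow> real \<Rightarrow> real"
  assumes zeta: "0 \<le> \<zeta>" "\<zeta> \<le> 1" and Fcont: "continuous_on {0<..<1} F"
    and Tmono: "\<And>n s s'. s \<le> s' \<Longrightarrow> T n s \<le> T n s'"
    and conv: "\<And>r. r \<in> \<rat> \<Longrightarrow> r \<in> {0<..<1} \<Longrightarrow> (\<lambda>n. T n r) \<longlonglongrightarrow> \<zeta> * F r"
    and t: "t \<in> {0<..<1}"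
  shows "(\<lambda>n. T n t) \<longlonglongrightarrow> \<zeta> * F t"
  unfolding tendsto_iff dist_real_def
proof (intro allI impI)
  fix e :: real assume e: "e > 0"
  have "isCont F t" using continuous_on_interior[OF Fcont] t by (simp add: interior_open)
  then obtain d where d: "d > 0" "\<And>s. \<bar>s - t\<bar> < d \<Longrightarrow> \<bar>F s - F t\<bar> < e / 2"
    using e unfolding continuous_at_eps_delta dist_real_def by (metis half_gt_zero)
  obtain r1 where r1: "r1 \<in> \<rat>" "max (t - d) 0 < r1" "r1 < t"
    using Rats_dense_in_real[of "max (t - d) 0" t] t d by auto
  obtain r2 where r2: "r2 \<in> \<rat>" "t < r2" "r2 < min (t + d) 1"
    using Rats_dense_in_real[of t "min (t + d) 1"] t d by auto
  have r1I: "r1 \<in> {0<..<1}" using r1 t by auto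
  have r2I: "r2 \<in> {0<..<1}" using r2 t by auto
  have F1: "\<bar>F r1 - F t\<bar> < e / 2" using d(2)[of r1] r1 by auto
  have F2: "\<bar>F r2 - F t\<bar> < e / 2" using d(2)[of r2] r2 by auto
  have z1: "\<bar>\<zeta> * F r1 - \<zeta> * F t\<bar> < e / 2"
  proof -
    have "\<bar>\<zeta> * F r1 - \<zeta> * F t\<bar> = \<zeta> * \<bar>F r1 - F t\<bar>"
      using zeta by (simp add: abs_mult right_diff_distrib[symmetric])
    also have "\<dots> \<le> \<bar>F r1 - F t\<bar>" using zeta by (simp add: mult_left_le_one_le)
    finally show ?thesis using F1 by simp
  qed
  have z2: "\<bar>\<zeta> * F r2 - \<zeta> * F t\<bar> < e / 2"
  proof -
    have "\<bar>\<zeta> * F r2 - \<zeta> * F t\<bar> = \<zeta> * \<bar>F r2 - F t\<bar>"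
      using zeta by (simp add: abs_mult right_diff_distrib[symmetric])
    also have "\<dots> \<le> \<bar>F r2 - F t\<bar>" using zeta by (simp add: mult_left_le_one_le)
    finally show ?thesis using F2 by simp
  qed
  have e2: "e / 2 > 0" using e by simp
  have ev1: "\<forall>\<^sub>F n in sequentially. \<bar>T n r1 - \<zeta> * F r1\<bar> < e / 2"
    using conv[OF r1(1) r1I] e2 unfolding tendsto_iff dist_real_def by blast
  have ev2: "\<forall>\<^sub>F n in sequentially. \<bar>T n r2 - \<zeta> * F r2\<bar> < e / 2"
    using conv[OF r2(1) r2I] e2 unfolding tendsto_iff dist_real_def by blast
  show "\<forall>\<^sub>F n in sequentially. \<bar>T n t - \<zeta> * F t\<bar> < e"
    using ev1 ev2
  proof eventually_elim
    case (elim n)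
    have "T n r1 \<le> T n t" "T n t \<le> T n r2" using r1 r2 Tmono by auto
    then show ?case using elim z1 z2 unfolding abs_less_iff by linarith
  qed
qed


lemma (in prob_space) indep_vars_reindex:
  assumes inj: "inj_on f I" and ind: "indep_vars M' X (f ` I)"
  shows "indep_vars (\<lambda>i. M' (f i)) (\<lambda>i. X (f i)) I"
proof -
  define F where "F i = sigma_sets (space M) {X i -` A \<inter> space M |A. A \<in> sets (M' i)}" for i
  from ind have rv: "\<forall>i\<in>f`I. random_variable (M' i) (X i)" and
    isF: "indep_sets F (f ` I)"
    unfolding indep_vars_def F_def by auto
  have "indep_sets (\<lambda>i. F (f i)) I"
    unfolding indep_sets_def
  proof (intro conjI ballI allI impI)
    fix i assume "i \<in> I" then show "F (f i) \<subseteq> events"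
      using isF unfolding indep_sets_def by auto
  next
    fix J A assume J: "J \<subseteq> I" "J \<noteq> {}" "finite J" and A: "A \<in> Pi J (\<lambda>i. F (f i))"
    define B where "B y = A (the_inv_into J f y)" for y
    have injJ: "inj_on f J" using inj J(1) by (rule inj_on_subset)
    have Bf: "B (f j) = A j" if "j \<in> J" for j using the_inv_into_f_f[OF injJ that] B_def by simp
    have B: "B \<in> Pi (f ` J) F" using A Bf by auto
    have fJ: "f ` J \<subseteq> f ` I" "f ` J \<noteq> {}" "finite (f ` J)" using J by auto
    have "prob (\<Inter>j\<in>f`J. B j) = (\<Prod>j\<in>f`J. prob (B j))"
      using isF fJ B unfolding indep_sets_def by blast
    moreover have "(\<Inter>j\<in>f`J. B j) = (\<Inter>j\<in>J. A j)" using Bf by auto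
    moreover have "(\<Prod>j\<in>f`J. prob (B j)) = (\<Prod>j\<in>J. prob (A j))"
    proof -
      have "(\<Prod>j\<in>f`J. prob (B j)) = (\<Prod>j\<in>J. prob (B (f j)))"
        using prod.reindex[OF injJ, of "\<lambda>j. prob (B j)"] by (simp add: comp_def)
      also have "\<dots> = (\<Prod>j\<in>J. prob (A j))" by (rule prod.cong) (auto simp: Bf)
      finally show ?thesis .
    qed
    ultimately show "prob (\<Inter>j\<in>J. A j) = (\<Prod>j\<in>J. prob (A j))" by simp
  qed
  then show ?thesis unfolding indep_vars_def F_def using rv by auto
qed

locale idm = prob_space M for M :: "'a measure" +
  fixes Xs Zs Ts :: "real set" and g g1 :: "real \<Rightarrow> real \<Rightarrow> real" and WX WT :: "real \<Rightarrow> real"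
    and X0 Z :: "'a \<Rightarrow> real"
  assumes intervals: "is_interval Xs" "is_interval Zs" "is_interval Ts"
    and g_cont: "continuous_on (Xs \<times> Zs) (\<lambda>(x, w). g x w)"
    and g_range: "\<forall>x\<in>Xs. \<forall>w\<in>Zs. g x w \<in> Ts"
    and g_mono1: "\<forall>w\<in>Zs. strict_mono_on Xs (\<lambda>x. g x w)"
    and g1_inv: "\<forall>x\<in>Xs. \<forall>w\<in>Zs. \<forall>t\<in>Ts. (g x w = t \<longleftrightarrow> x = g1 t w)"
    and Z_meas: "Z \<in> borel_measurable M" and Z_range: "\<forall>\<omega>\<in>space M. Z \<omega> \<in> Zs"
    and X0_meas: "X0 \<in> borel_measurable M" and X0_range: "\<forall>\<omega>\<in>space M. X0 \<omega> \<in> Xs"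
    and indep: "indep_var borel Z borel X0"
    and WX_cdf: "\<forall>x. WX x = measure M {\<omega>\<in>space M. X0 \<omega> \<le> x}"
    and WX_cont: "continuous_on UNIV WX"
    and WT_cdf: "\<forall>t. WT t = measure M {\<omega> \<in> space M. g (X0 \<omega>) (Z \<omega>) \<le> t}"
    and Finf_ext: "\<forall>w\<in>Zs. \<exists>F. continuous_on {0..1} F \<and> F 0 = 0
                    \<and> (\<forall>t\<in>{0<..<1}. F t = Finf WX WT g1 w t)
                    \<and> (\<exists>d. (F has_real_derivative d) (at 0 within {0..1}))"
begin

definition "T0 \<omega> = g (X0 \<omega>) (Z \<omega>)"
definition "gg p = indicator (Zs \<times> Xs) p *\<^sub>R g (snd p) (fst p)"

lemma Xs_borel: "Xs \<in> sets borel" and Zs_borel: "Zs \<in> sets borel"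
  using intervals by (auto intro: real_interval_borel_measurable)

lemma gcont_x: "w \<in> Zs \<Longrightarrow> continuous_on Xs (\<lambda>x. g x w)"
proof -
  assume w: "w \<in> Zs"
  have c: "continuous_on Xs (\<lambda>x. (x, w))" by (intro continuous_intros)
  have s: "(\<lambda>x. (x, w)) ` Xs \<subseteq> Xs \<times> Zs" using w by auto
  show ?thesis using continuous_on_compose2[OF g_cont c s] by simp
qed

lemma gcont_w: "x \<in> Xs \<Longrightarrow> continuous_on Zs (\<lambda>w. g x w)"
proof -
  assume x: "x \<in> Xs"
  have c: "continuous_on Zs (\<lambda>w. (x, w))" by (intro continuous_intros)
  have s: "(\<lambda>w. (x, w)) ` Zs \<subseteq> Xs \<times> Zs" using x by auto
  show ?thesis using continuous_on_compose2[OF g_cont c s] by simp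
qed

lemma gg_meas: "gg \<in> borel_measurable borel"
proof -
  have c0: "continuous_on (Zs \<times> Xs) (\<lambda>p. (snd p, fst p))" by (intro continuous_intros)
  have s: "(\<lambda>p. (snd p, fst p)) ` (Zs \<times> Xs) \<subseteq> Xs \<times> Zs" by auto
  have c: "continuous_on (Zs \<times> Xs) (\<lambda>p. g (snd p) (fst p))"
    using continuous_on_compose2[OF g_cont c0 s] by (simp add: case_prod_beta)
  have "Zs \<times> Xs \<in> sets borel" using Xs_borel Zs_borel by (rule borel_Times[rotated])
  then show ?thesis unfolding gg_def[abs_def]
    by (rule borel_measurable_continuous_on_indicator[OF _ c])
qed

lemma gg_eq: "w \<in> Zs \<Longrightarrow> x \<in> Xs \<Longrightarrow> gg (w, x) = g x w"
  by (simp add: gg_def)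

lemma T0_meas: "T0 \<in> borel_measurable M"
proof -
  have "(\<lambda>\<omega>. gg (Z \<omega>, X0 \<omega>)) \<in> borel_measurable M"
    using gg_meas Z_meas X0_meas by (simp add: borel_prod[symmetric])
  moreover have "\<omega> \<in> space M \<Longrightarrow> gg (Z \<omega>, X0 \<omega>) = T0 \<omega>" for \<omega>
    using Z_range X0_range by (simp add: gg_eq T0_def)
  ultimately show ?thesis by (rule measurable_cong[THEN iffD1, rotated]) simp
qed

lemma gw_meas: "w \<in> Zs \<Longrightarrow> (\<lambda>\<omega>. g (X0 \<omega>) w) \<in> borel_measurable M"
proof -
  assume w: "w \<in> Zs"
  have "(\<lambda>\<omega>. gg (w, X0 \<omega>)) \<in> borel_measurable M"
    using gg_meas X0_meas by (simp add: borel_prod[symmetric])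
  moreover have "\<omega> \<in> space M \<Longrightarrow> gg (w, X0 \<omega>) = g (X0 \<omega>) w" for \<omega>
    using w X0_range by (simp add: gg_eq)
  ultimately show ?thesis by (rule measurable_cong[THEN iffD1, rotated]) simp
qed

end

context idm begin

lemma X0_dist: "real_distribution (distr M borel X0)" using X0_meas by simp
lemma T0_dist: "real_distribution (distr M borel T0)" using T0_meas by simp

lemma WX_cdf': "WX = cdf (distr M borel X0)"
proof
  fix x
  have "cdf (distr M borel X0) x = measure M (X0 -` {..x} \<inter> space M)"
    unfolding cdf_def using X0_meas by (simp add: measure_distr)
  also have "X0 -` {..x} \<inter> space M = {\<omega>\<in>space M. X0 \<omega> \<le> x}" by auto
  finally show "WX x = cdf (distr M borel X0) x" using WX_cdf by simp
qed

lemma WT_cdf': "WT = cdf (distr M borel T0)"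
proof
  fix x
  have "cdf (distr M borel T0) x = measure M (T0 -` {..x} \<inter> space M)"
    unfolding cdf_def using T0_meas by (simp add: measure_distr)
  also have "T0 -` {..x} \<inter> space M = {\<omega>\<in>space M. g (X0 \<omega>) (Z \<omega>) \<le> x}" by (auto simp: T0_def)
  finally show "WT x = cdf (distr M borel T0) x" using WT_cdf by simp
qed

lemma P_X0_pt: "measure M {\<omega>\<in>space M. X0 \<omega> = x} = 0"
proof -
  interpret D: real_distribution "distr M borel X0" by (rule X0_dist)
  have "isCont WX x" using WX_cont by (simp add: continuous_on_eq_continuous_at)
  then have "measure (distr M borel X0) {x} = 0" unfolding WX_cdf' by (simp add: D.isCont_cdf)
  moreover have "measure (distr M borel X0) {x} = measure M (X0 -` {x} \<inter> space M)"
    using X0_meas by (simp add: measure_distr)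
  moreover have "X0 -` {x} \<inter> space M = {\<omega>\<in>space M. X0 \<omega> = x}" by auto
  ultimately show ?thesis by simp
qed

lemma X0_sets [intro]: "{\<omega>\<in>space M. P (X0 \<omega>)} \<in> sets M" if "{x. P x} \<in> sets borel"
proof -
  have "X0 -` {x. P x} \<inter> space M \<in> sets M" using X0_meas that by (rule measurable_sets)
  also have "X0 -` {x. P x} \<inter> space M = {\<omega>\<in>space M. P (X0 \<omega>)}" by auto
  finally show ?thesis .
qed

lemma P_X0_lt: "measure M {\<omega>\<in>space M. X0 \<omega> < x} = WX x"
proof -
  have U: "{\<omega>\<in>space M. X0 \<omega> \<le> x} = {\<omega>\<in>space M. X0 \<omega> < x} \<union> {\<omega>\<in>space M. X0 \<omega> = x}" by auto
  have s1: "{\<omega>\<in>space M. X0 \<omega> < x} \<in> sets M" by (rule X0_sets) measurable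
  have s2: "{\<omega>\<in>space M. X0 \<omega> = x} \<in> sets M" by (rule X0_sets) measurable
  have "measure M ({\<omega>\<in>space M. X0 \<omega> < x} \<union> {\<omega>\<in>space M. X0 \<omega> = x}) =
      measure M {\<omega>\<in>space M. X0 \<omega> < x} + measure M {\<omega>\<in>space M. X0 \<omega> = x}"
    by (rule finite_measure_Union[OF s1 s2]) auto
  then show ?thesis using P_X0_pt WX_cdf U by simp
qed

lemma P_X0_ge: "measure M {\<omega>\<in>space M. x \<le> X0 \<omega>} = 1 - WX x"
proof -
  have "{\<omega>\<in>space M. x \<le> X0 \<omega>} = space M - {\<omega>\<in>space M. X0 \<omega> < x}" by auto
  then show ?thesis using prob_compl[OF X0_sets[of "\<lambda>y. y < x"]] P_X0_lt by simp
qed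

lemma WX_range: "0 \<le> WX x" "WX x \<le> 1" using WX_cdf by auto

lemma gw_sets: "w \<in> Zs \<Longrightarrow> S \<in> sets borel \<Longrightarrow> {\<omega>\<in>space M. g (X0 \<omega>) w \<in> S} \<in> sets M"
proof -
  assume w: "w \<in> Zs" and S: "S \<in> sets borel"
  have "(\<lambda>\<omega>. g (X0 \<omega>) w) -` S \<inter> space M \<in> sets M" using gw_meas[OF w] S by (rule measurable_sets)
  also have "(\<lambda>\<omega>. g (X0 \<omega>) w) -` S \<inter> space M = {\<omega>\<in>space M. g (X0 \<omega>) w \<in> S}" by auto
  finally show ?thesis .
qed

lemma g_less_iff: "w \<in> Zs \<Longrightarrow> x \<in> Xs \<Longrightarrow> x' \<in> Xs \<Longrightarrow> g x w < g x' w \<longleftrightarrow> x < x'"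
  using g_mono1 by (metis linorder_neq_iff order_less_asym strict_mono_onD)

lemma g_le_iff: "w \<in> Zs \<Longrightarrow> x \<in> Xs \<Longrightarrow> x' \<in> Xs \<Longrightarrow> g x w \<le> g x' w \<longleftrightarrow> x \<le> x'"
  using g_less_iff by (meson not_le)

lemma g_eq_iff: assumes "w \<in> Zs" "x \<in> Xs" "x' \<in> Xs" shows "g x w = g x' w \<longleftrightarrow> x = x'"
  using g_le_iff[OF assms] g_le_iff[OF assms(1,3,2)] by auto

lemma P_gw_pt: "w \<in> Zs \<Longrightarrow> measure M {\<omega>\<in>space M. g (X0 \<omega>) w = y} = 0"
proof -
  assume w: "w \<in> Zs"
  show ?thesis
  proof (cases "\<exists>x\<in>Xs. g x w = y")
    case True
    then obtain x where x: "x \<in> Xs" "g x w = y" by auto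
    have "{\<omega>\<in>space M. g (X0 \<omega>) w = y} = {\<omega>\<in>space M. X0 \<omega> = x}"
      using x X0_range g_eq_iff[OF w] by auto
    then show ?thesis using P_X0_pt by simp
  next
    case False
    then have "{\<omega>\<in>space M. g (X0 \<omega>) w = y} = {}" using X0_range by auto
    then show ?thesis by (metis measure_empty)
  qed
qed

lemma FUB:
  assumes S: "S \<in> sets borel" and v: "\<And>w. w \<in> Zs \<Longrightarrow> measure M {\<omega>\<in>space M. g (X0 \<omega>) w \<in> S} = v"
    and v0: "0 \<le> v"
  shows "measure M {\<omega>\<in>space M. T0 \<omega> \<in> S} = v"
proof -
  define PZ where "PZ = distr M borel Z"
  define PX where "PX = distr M borel X0"
  interpret PZ: prob_space PZ unfolding PZ_def by (rule prob_space_distr[OF Z_meas])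
  interpret PX: prob_space PX unfolding PX_def by (rule prob_space_distr[OF X0_meas])
  have eq: "PZ \<Otimes>\<^sub>M PX = distr M (borel \<Otimes>\<^sub>M borel) (\<lambda>\<omega>. (Z \<omega>, X0 \<omega>))"
    using indep unfolding PZ_def PX_def by (simp add: indep_var_distribution_eq)
  define D where "D = gg -` S"
  have Db: "D \<in> sets (borel \<Otimes>\<^sub>M borel)"
  proof -
    have "gg -` S \<inter> space borel \<in> sets borel" using gg_meas S by (rule measurable_sets)
    then show ?thesis unfolding D_def by (subst borel_prod) simp
  qed
  have pairm: "(\<lambda>\<omega>. (Z \<omega>, X0 \<omega>)) \<in> measurable M (borel \<Otimes>\<^sub>M borel)"
    using Z_meas X0_meas by simp
  have "emeasure M {\<omega>\<in>space M. T0 \<omega> \<in> S} = emeasure M ((\<lambda>\<omega>. (Z \<omega>, X0 \<omega>)) -` D \<inter> space M)"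
    using Z_range X0_range by (intro arg_cong[where f="emeasure M"]) (auto simp: D_def gg_eq T0_def)
  also have "\<dots> = emeasure (distr M (borel \<Otimes>\<^sub>M borel) (\<lambda>\<omega>. (Z \<omega>, X0 \<omega>))) D"
    by (rule emeasure_distr[OF pairm Db, symmetric])
  also have "\<dots> = emeasure (PZ \<Otimes>\<^sub>M PX) D" by (simp add: eq)
  also have "\<dots> = (\<integral>\<^sup>+w. emeasure PX (Pair w -` D) \<partial>PZ)"
    by (rule PX.emeasure_pair_measure_alt) (use Db in \<open>simp add: PZ_def PX_def\<close>)
  also have "\<dots> = (\<integral>\<^sup>+w. ennreal v \<partial>PZ)"
  proof (rule nn_integral_cong_AE)
    have "AE w in PZ. w \<in> Zs"
      unfolding PZ_def using Z_meas Zs_borel Z_range by (subst AE_distr_iff) (auto intro!: AE_I2)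
    then show "AE w in PZ. emeasure PX (Pair w -` D) = ennreal v"
    proof (rule AE_mp, intro AE_I2 impI)
      fix w assume w: "w \<in> Zs"
      have PD: "Pair w -` D \<in> sets borel" using Db by (rule sets_Pair1[of _ borel borel, simplified])
      have "emeasure PX (Pair w -` D) = emeasure M (X0 -` (Pair w -` D) \<inter> space M)"
        unfolding PX_def by (rule emeasure_distr[OF X0_meas PD])
      also have "X0 -` (Pair w -` D) \<inter> space M = {\<omega>\<in>space M. g (X0 \<omega>) w \<in> S}"
        using w X0_range by (auto simp: D_def gg_eq)
      also have "emeasure M \<dots> = ennreal v"
        using v[OF w] gw_sets[OF w S] by (simp add: emeasure_eq_measure)
      finally show "emeasure PX (Pair w -` D) = ennreal v" .
    qed
  qed
  also have "\<dots> = ennreal v" by (simp add: PZ.emeasure_space_1)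
  finally have "emeasure M {\<omega>\<in>space M. T0 \<omega> \<in> S} = ennreal v" .
  then show ?thesis using v0 by (simp add: emeasure_eq_measure)
qed

lemma P_T0_pt: "measure M {\<omega>\<in>space M. T0 \<omega> = y} = 0"
  using FUB[of "{y}" 0] P_gw_pt by simp

lemma WT_cont: "isCont WT y"
proof -
  interpret D: real_distribution "distr M borel T0" by (rule T0_dist)
  have "measure (distr M borel T0) {y} = measure M (T0 -` {y} \<inter> space M)"
    using T0_meas by (simp add: measure_distr)
  moreover have "T0 -` {y} \<inter> space M = {\<omega>\<in>space M. T0 \<omega> = y}" by auto
  ultimately have "measure (distr M borel T0) {y} = 0" using P_T0_pt by simp
  then show ?thesis unfolding WT_cdf' by (simp add: D.isCont_cdf)
qed

lemma WT_mono: "x \<le> y \<Longrightarrow> WT x \<le> WT y"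
proof -
  interpret D: real_distribution "distr M borel T0" by (rule T0_dist)
  show "x \<le> y \<Longrightarrow> WT x \<le> WT y" unfolding WT_cdf' by (rule D.cdf_nondecreasing)
qed

lemma WT_lim_top: "(WT \<longlongrightarrow> 1) at_top"
proof -
  interpret D: real_distribution "distr M borel T0" by (rule T0_dist)
  show ?thesis unfolding WT_cdf' by (rule D.cdf_lim_at_top_prob)
qed

lemma WT_lim_bot: "(WT \<longlongrightarrow> 0) at_bot"
proof -
  interpret D: real_distribution "distr M borel T0" by (rule T0_dist)
  show ?thesis unfolding WT_cdf' by (rule D.cdf_lim_at_bot)
qed

lemma WT_range: "0 \<le> WT x" "WT x \<le> 1" using WT_cdf by auto

lemma T0_sets [intro]: "{\<omega>\<in>space M. P (T0 \<omega>)} \<in> sets M" if "{x. P x} \<in> sets borel"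
proof -
  have "T0 -` {x. P x} \<inter> space M \<in> sets M" using T0_meas that by (rule measurable_sets)
  also have "T0 -` {x. P x} \<inter> space M = {\<omega>\<in>space M. P (T0 \<omega>)}" by auto
  finally show ?thesis .
qed

lemma P_T0_ge: "measure M {\<omega>\<in>space M. y \<le> T0 \<omega>} = 1 - WT y"
proof -
  have U: "{\<omega>\<in>space M. T0 \<omega> \<le> y} = {\<omega>\<in>space M. T0 \<omega> < y} \<union> {\<omega>\<in>space M. T0 \<omega> = y}" by auto
  have s1: "{\<omega>\<in>space M. T0 \<omega> < y} \<in> sets M" by (rule T0_sets) measurable
  have s2: "{\<omega>\<in>space M. T0 \<omega> = y} \<in> sets M" by (rule T0_sets) measurable
  have "measure M ({\<omega>\<in>space M. T0 \<omega> < y} \<union> {\<omega>\<in>space M. T0 \<omega> = y}) =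
      measure M {\<omega>\<in>space M. T0 \<omega> < y} + measure M {\<omega>\<in>space M. T0 \<omega> = y}"
    by (rule finite_measure_Union[OF s1 s2]) auto
  then have lt: "measure M {\<omega>\<in>space M. T0 \<omega> < y} = WT y"
    using P_T0_pt WT_cdf U by (simp add: T0_def)
  have "{\<omega>\<in>space M. y \<le> T0 \<omega>} = space M - {\<omega>\<in>space M. T0 \<omega> < y}" by auto
  then show ?thesis using prob_compl[OF s1] lt by simp
qed

end

context idm begin

definition "q t = cdf_inv WT (1 - t)"
definition "G w t = measure M {\<omega>\<in>space M. pvalue WT g (X0 \<omega>) w \<le> t}"

lemma WT_contin: "continuous_on A WT"
  using WT_cont by (simp add: continuous_at_imp_continuous_on)

lemma q_props:
  assumes t: "t \<in> {0<..<1}"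
  shows "\<And>y. 1 - t \<le> WT y \<longleftrightarrow> q t \<le> y" and "WT (q t) = 1 - t"
proof -
  define u where "u = 1 - t"
  have u: "0 < u" "u < 1" using t by (auto simp: u_def)
  define S where "S = {y. u \<le> WT y}"
  have qS: "q t = Inf S" by (simp add: q_def cdf_inv_def S_def u_def)
  have "\<forall>\<^sub>F y in at_top. u < WT y" by (rule order_tendstoD(1)[OF WT_lim_top u(2)])
  then obtain N where "\<And>y. y \<ge> N \<Longrightarrow> u < WT y" by (auto simp: eventually_at_top_linorder)
  then have Sne: "S \<noteq> {}" unfolding S_def by (metis (mono_tags) empty_iff less_le_not_le mem_Collect_eq order_refl)
  have "\<forall>\<^sub>F y in at_bot. WT y < u" by (rule order_tendstoD(2)[OF WT_lim_bot u(1)])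
  then obtain L where L: "\<And>y. y \<le> L \<Longrightarrow> WT y < u" by (auto simp: eventually_at_bot_linorder)
  have Lb: "L < y" if "y \<in> S" for y using L[of y] that by (force simp: S_def)
  then have bdd: "bdd_below S" by (meson bdd_below.I less_imp_le)
  have cl: "closed S" unfolding S_def
    by (rule closed_Collect_le) (auto intro: continuous_intros WT_contin)
  have qin: "q t \<in> S" unfolding qS by (rule closed_contains_Inf[OF Sne bdd cl])
  show char: "1 - t \<le> WT y \<longleftrightarrow> q t \<le> y" for y
  proof
    assume "1 - t \<le> WT y" then have "y \<in> S" by (simp add: S_def u_def)
    then show "q t \<le> y" unfolding qS by (rule cInf_lower[OF _ bdd])
  next
    assume "q t \<le> y" then have "WT (q t) \<le> WT y" by (rule WT_mono)
    then show "1 - t \<le> WT y" using qin by (simp add: S_def u_def)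
  qed
  show "WT (q t) = 1 - t"
  proof (rule ccontr)
    assume ne: "WT (q t) \<noteq> 1 - t"
    have ge: "u \<le> WT (q t)" using qin by (simp add: S_def)
    have Lq: "L < q t" using Lb[OF qin] .
    have "WT L < u" using L by simp
    then obtain y where y: "L \<le> y" "y \<le> q t" "WT y = u"
      using IVT'[of WT L u "q t"] ge Lq WT_contin by fastforce
    then have "q t \<le> y" using char[of y] by (simp add: u_def)
    then have "y = q t" using y by simp
    then show False using y ne by (simp add: u_def)
  qed
qed

lemma q_anti: "t \<in> {0<..<1} \<Longrightarrow> t' \<in> {0<..<1} \<Longrightarrow> t \<le> t' \<Longrightarrow> q t' \<le> q t"
proof -
  assume t: "t \<in> {0<..<1}" and t': "t' \<in> {0<..<1}" and le: "t \<le> t'"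
  have "1 - t \<le> WT (q t)" using q_props(1)[OF t] by simp
  then have "1 - t' \<le> WT (q t)" using le by simp
  then show ?thesis using q_props(1)[OF t'] by simp
qed

lemma pv_iff: "t \<in> {0<..<1} \<Longrightarrow> pvalue WT g x w \<le> t \<longleftrightarrow> q t \<le> g x w"
  using q_props(1)[of t "g x w"] by (auto simp: pvalue_def)

lemma T0_Ts: "\<omega> \<in> space M \<Longrightarrow> T0 \<omega> \<in> Ts"
  using g_range X0_range Z_range by (simp add: T0_def)

lemma q_Ts: assumes t: "t \<in> {0<..<1}" shows "q t \<in> Ts"
proof -
  have "measure M {\<omega>\<in>space M. T0 \<omega> \<le> q t} = 1 - t"
    using q_props(2)[OF t] WT_cdf by (simp add: T0_def)
  then have "{\<omega>\<in>space M. T0 \<omega> \<le> q t} \<noteq> {}"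
  proof (intro notI)
    assume m: "measure M {\<omega>\<in>space M. T0 \<omega> \<le> q t} = 1 - t" and E: "{\<omega>\<in>space M. T0 \<omega> \<le> q t} = {}"
    then have "1 - t = 0" by simp
    then show False using t by simp
  qed
  then obtain \<omega>1 where 1: "\<omega>1 \<in> space M" "T0 \<omega>1 \<le> q t" by auto
  have "measure M {\<omega>\<in>space M. q t \<le> T0 \<omega>} = t" using P_T0_ge q_props(2)[OF t] by simp
  then have "{\<omega>\<in>space M. q t \<le> T0 \<omega>} \<noteq> {}"
  proof (intro notI)
    assume m: "measure M {\<omega>\<in>space M. q t \<le> T0 \<omega>} = t" and E: "{\<omega>\<in>space M. q t \<le> T0 \<omega>} = {}"
    then have "t = 0" by simp
    then show False using t by simp
  qed
  then obtain \<omega>2 where 2: "\<omega>2 \<in> space M" "q t \<le> T0 \<omega>2" by auto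
  have I: "\<forall>a\<in>Ts. \<forall>b\<in>Ts. \<forall>x. a \<le> x \<and> x \<le> b \<longrightarrow> x \<in> Ts"
    using intervals(3) unfolding is_interval_1 .
  show ?thesis using I[rule_format, OF T0_Ts[OF 1(1)] T0_Ts[OF 2(1)]] 1(2) 2(2) by simp
qed

lemma G_eq: "w \<in> Zs \<Longrightarrow> t \<in> {0<..<1} \<Longrightarrow> G w t = measure M {\<omega>\<in>space M. q t \<le> g (X0 \<omega>) w}"
  unfolding G_def using pv_iff by simp

lemma G_range: "0 \<le> G w t" "G w t \<le> 1" by (auto simp: G_def)

lemma G_mono: assumes w: "w \<in> Zs" and t: "t \<in> {0<..<1}" and t': "t' \<in> {0<..<1}" and le: "t \<le> t'"
  shows "G w t \<le> G w t'"
proof -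
  have "{\<omega>\<in>space M. q t \<le> g (X0 \<omega>) w} \<subseteq> {\<omega>\<in>space M. q t' \<le> g (X0 \<omega>) w}"
    using q_anti[OF t t' le] by auto
  moreover have [measurable]: "(\<lambda>\<omega>. g (X0 \<omega>) w) \<in> borel_measurable M" by (rule gw_meas[OF w])
  ultimately show ?thesis unfolding G_eq[OF w t] G_eq[OF w t']
    by (intro finite_measure_mono) measurable
qed

abbreviation "\<Phi> \<equiv> Finf WX WT g1"

lemma caseA:
  assumes w: "w \<in> Zs" and t: "t \<in> {0<..<1}" and x: "x \<in> Xs" "g x w = q t"
  shows "G w t = \<Phi> w t"
proof -
  have g1: "x = g1 (q t) w" using g1_inv x w q_Ts[OF t] by auto
  have "{\<omega>\<in>space M. q t \<le> g (X0 \<omega>) w} = {\<omega>\<in>space M. x \<le> X0 \<omega>}"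
    using X0_range x g_le_iff[OF w] by (auto, metis, metis)
  then have "G w t = 1 - WX x" using G_eq[OF w t] P_X0_ge by simp
  also have "\<dots> = \<Phi> w t" by (simp add: Finf_def g1 q_def)
  finally show ?thesis .
qed

lemma Phi01:
  assumes w: "w \<in> Zs" and t: "t \<in> {0<..<1}" and nA: "\<not> (\<exists>x\<in>Xs. g x w = q t)"
  shows "\<Phi> w t = 0 \<or> \<Phi> w t = 1"
proof -
  define x' where "x' = g1 (q t) w"
  have nx: "x' \<notin> Xs" using g1_inv w q_Ts[OF t] nA by (auto simp: x'_def)
  have "\<Phi> w t = 1 - WX x'" by (simp add: Finf_def x'_def q_def)
  moreover have "WX x' = 0 \<or> WX x' = 1"
  proof (cases "\<exists>a\<in>Xs. a \<le> x'")
    case True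
    have "\<forall>b\<in>Xs. b < x'"
    proof (rule ccontr)
      assume "\<not> (\<forall>b\<in>Xs. b < x')"
      then obtain b where b: "b \<in> Xs" "x' \<le> b" by (auto simp: not_less)
      obtain a where a: "a \<in> Xs" "a \<le> x'" using True by auto
      have I: "\<forall>a\<in>Xs. \<forall>b\<in>Xs. \<forall>x. a \<le> x \<and> x \<le> b \<longrightarrow> x \<in> Xs"
        using intervals(1) unfolding is_interval_1 .
      show False using I[rule_format, OF a(1) b(1)] a(2) b(2) nx by simp
    qed
    then have "{\<omega>\<in>space M. X0 \<omega> \<le> x'} = space M" using X0_range by (auto simp: less_imp_le)
    then show ?thesis using WX_cdf by (simp add: prob_space)
  next
    case False
    then have "{\<omega>\<in>space M. X0 \<omega> \<le> x'} = {}" using X0_range by auto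
    then have "WX x' = 0" using WX_cdf by (metis measure_empty)
    then show ?thesis by simp
  qed
  ultimately show ?thesis by auto
qed

lemma caseBC:
  assumes w: "w \<in> Zs" and t: "t \<in> {0<..<1}" and nA: "\<not> (\<exists>x\<in>Xs. g x w = q t)"
  shows "(\<forall>x\<in>Xs. g x w < q t) \<or> (\<forall>x\<in>Xs. q t < g x w)"
proof (rule ccontr)
  assume "\<not> ?thesis"
  then obtain x1 x2 where x: "x1 \<in> Xs" "q t \<le> g x1 w" "x2 \<in> Xs" "g x2 w \<le> q t"
    by (auto simp: not_less)
  have le: "x2 \<le> x1" using g_le_iff[OF w x(3) x(1)] x by simp
  have I: "\<forall>a\<in>Xs. \<forall>b\<in>Xs. \<forall>x. a \<le> x \<and> x \<le> b \<longrightarrow> x \<in> Xs"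
    using intervals(1) unfolding is_interval_1 .
  have sub: "{x2..x1} \<subseteq> Xs" using I[rule_format, OF x(3) x(1)] by auto
  have "continuous_on {x2..x1} (\<lambda>x. g x w)" using gcont_x[OF w] sub by (rule continuous_on_subset)
  then obtain x where "x2 \<le> x" "x \<le> x1" "g x w = q t"
    using IVT'[of "\<lambda>x. g x w" x2 "q t" x1] x le by auto
  then show False using nA sub by auto
qed

lemma caseB:
  assumes w: "w \<in> Zs" and t: "t \<in> {0<..<1}" and B: "\<forall>x\<in>Xs. g x w < q t"
  shows "G w t = 0"
proof -
  have "{\<omega>\<in>space M. q t \<le> g (X0 \<omega>) w} = {}" using X0_range B by force
  then show ?thesis using G_eq[OF w t] by (metis measure_empty)
qed

lemma caseC:
  assumes w: "w \<in> Zs" and t: "t \<in> {0<..<1}" and C: "\<forall>x\<in>Xs. q t < g x w"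
  shows "G w t = 1"
proof -
  have "{\<omega>\<in>space M. q t \<le> g (X0 \<omega>) w} = space M" using X0_range C by (force simp: less_imp_le)
  then show ?thesis using G_eq[OF w t] by (simp add: prob_space)
qed

end

context idm begin

lemma Fext: assumes "w \<in> Zs"
  obtains F where "continuous_on {0..1} F" "F 0 = 0" "\<And>t. t \<in> {0<..<1} \<Longrightarrow> F t = \<Phi> w t"
  using Finf_ext assms by blast

lemma PW:
  assumes w: "w \<in> Zs" and t0: "t0 \<in> {0<..<1}" and ne: "G w t0 \<noteq> \<Phi> w t0"
  shows "G w t0 = 1" and "\<forall>t\<in>{0<..<(1::real)}. G w t = 0 \<or> G w t = 1"
proof -
  obtain F where F: "continuous_on {0..1} F" "F 0 = 0" "\<And>t. t \<in> {0<..<1} \<Longrightarrow> F t = \<Phi> w t"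
    using Fext[OF w] by blast
  have nA: "\<not> (\<exists>x\<in>Xs. g x w = q t0)" using caseA[OF w t0] ne by metis
  have P01: "\<Phi> w t0 = 0 \<or> \<Phi> w t0 = 1" by (rule Phi01[OF w t0 nA])
  have notB: "\<not> (\<forall>x\<in>Xs. g x w < q t0)"
  proof
    assume B: "\<forall>x\<in>Xs. g x w < q t0"
    then have "G w t0 = 0" by (rule caseB[OF w t0])
    then have F1: "F t0 = 1" using ne P01 F(3)[OF t0] by auto
    have "continuous_on {0..t0} F" by (rule continuous_on_subset[OF F(1)]) (use t0 in auto)
    then obtain s where s: "0 \<le> s" "s \<le> t0" "F s = 1/2"
      using IVT'[of F 0 "1/2" t0] F(2) F1 t0 by auto
    have s0: "s \<noteq> 0" using s F(2) by auto
    then have sI: "s \<in> {0<..<1}" using s t0 by auto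
    have "q t0 \<le> q s" using q_anti[OF sI t0 s(2)] .
    then have "\<not> (\<exists>x\<in>Xs. g x w = q s)" using B by force
    then have "\<Phi> w s = 0 \<or> \<Phi> w s = 1" by (rule Phi01[OF w sI])
    then show False using s(3) F(3)[OF sI] by auto
  qed
  then have C: "\<forall>x\<in>Xs. q t0 < g x w" using caseBC[OF w t0 nA] by auto
  then show G1: "G w t0 = 1" by (rule caseC[OF w t0])
  have Phi0: "\<Phi> w t0 = 0" using P01 ne G1 by auto
  show "\<forall>t\<in>{0<..<(1::real)}. G w t = 0 \<or> G w t = 1"
  proof
    fix t :: real assume t: "t \<in> {0<..<1}"
    show "G w t = 0 \<or> G w t = 1"
    proof (cases "\<exists>x\<in>Xs. g x w = q t")
      case False
      then show ?thesis using caseBC[OF w t False] caseB[OF w t] caseC[OF w t] by auto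
    next
      case True
      then obtain x where x: "x \<in> Xs" "g x w = q t" by auto
      have GA: "G w t = \<Phi> w t" using caseA[OF w t x] .
      show ?thesis
      proof (rule ccontr)
        assume "\<not> ?thesis"
        then have v: "0 < G w t" "G w t < 1" using G_range[of w t] by auto
        have tt0: "t < t0"
        proof (rule ccontr)
          assume "\<not> t < t0" then have "q t \<le> q t0" using q_anti[OF t0 t] by simp
          then show False using C x by force
        qed
        define v where "v = G w t"
        have "continuous_on {t..t0} F" by (rule continuous_on_subset[OF F(1)]) (use t t0 in auto)
        then obtain s where s: "t \<le> s" "s \<le> t0" "F s = v/2"
          using IVT2'[of F t0 "v/2" t] F(3)[OF t0] Phi0 F(3)[OF t] GA v tt0 by (auto simp: v_def)
        have sI: "s \<in> {0<..<1}" using s t t0 by auto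
        have Gs: "G w t \<le> G w s" using G_mono[OF w t sI s(1)] .
        show False
        proof (cases "\<exists>x\<in>Xs. g x w = q s")
          case True
          then obtain x' where "x' \<in> Xs" "g x' w = q s" by auto
          then have "G w s = \<Phi> w s" by (rule caseA[OF w sI])
          then show False using Gs s(3) F(3)[OF sI] v by (simp add: v_def)
        next
          case False
          have P: "\<Phi> w s = 0 \<or> \<Phi> w s = 1" by (rule Phi01[OF w sI False])
          show False
          proof (cases "\<forall>x\<in>Xs. g x w < q s")
            case True
            then have "G w s = 0" by (rule caseB[OF w sI])
            then show False using Gs v by simp
          next
            case False
            then show False using P s(3) F(3)[OF sI] v by (auto simp: v_def)
          qed
        qed
      qed
    qed
  qed
qed

definition "pv w \<omega> = pvalue WT g (X0 \<omega>) w"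

lemma pv_range: "0 \<le> pv w \<omega>" "pv w \<omega> \<le> 1"
  using WT_range[of "g (X0 \<omega>) w"] by (auto simp: pv_def pvalue_def)

lemma WT_meas: "WT \<in> borel_measurable borel"
  by (rule borel_measurable_continuous_onI[OF WT_contin])

lemma pv_meas [measurable]: "w \<in> Zs \<Longrightarrow> pv w \<in> borel_measurable M"
  unfolding pv_def pvalue_def using gw_meas WT_meas by measurable

lemma G_pv: "G w t = measure M {\<omega>\<in>space M. pv w \<omega> \<le> t}"
  by (simp add: G_def pv_def)

lemma STEP:
  assumes w: "w \<in> Zs" and c: "0 \<le> c" "c < 1"
    and up: "\<And>t. t \<in> {c<..<1} \<Longrightarrow> G w t = 1"
    and lo: "\<And>t. t \<in> {0<..<c} \<Longrightarrow> G w t = 0"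
  shows "AE \<omega> in M. pv w \<omega> = c"
proof -
  have [measurable]: "pv w \<in> borel_measurable M" using w by simp
  have A1: "AE \<omega> in M. pv w \<omega> \<le> c + 1 / real (Suc k)" for k
  proof (cases "c + 1 / real (Suc k) < 1")
    case True
    have tI: "c + 1 / real (Suc k) \<in> {c<..<1}" using True by simp
    then have "measure M {\<omega>\<in>space M. pv w \<omega> \<le> c + 1 / real (Suc k)} = 1"
      using up[OF tI] by (simp add: G_pv)
    then show ?thesis by (rule AE_prob_1[THEN AE_mp]) (auto intro!: AE_I2)
  next
    case False
    then show ?thesis using pv_range[of w] by (auto intro!: AE_I2 simp: not_less intro: order.trans)
  qed
  have A2: "AE \<omega> in M. c - 1 / real (Suc k) \<le> pv w \<omega>" for k
  proof (cases "0 < c - 1 / real (Suc k)")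
    case True
    have tI: "c - 1 / real (Suc k) \<in> {0<..<c}" using True by simp
    then have "measure M {\<omega>\<in>space M. pv w \<omega> \<le> c - 1 / real (Suc k)} = 0"
      using lo[OF tI] by (simp add: G_pv)
    then have "AE \<omega> in M. \<not> pv w \<omega> \<le> c - 1 / real (Suc k)"
      by (subst AE_iff_measurable[OF _ refl]) (auto simp: emeasure_eq_measure)
    then show ?thesis by (rule AE_mp) (auto intro!: AE_I2)
  next
    case False
    then have le0: "c - 1 / real (Suc k) \<le> 0" by simp
    show ?thesis using pv_range(1)[of w] by (intro AE_I2) (meson le0 order.trans)
  qed
  have "AE \<omega> in M. \<forall>k. pv w \<omega> \<le> c + 1 / real (Suc k) \<and> c - 1 / real (Suc k) \<le> pv w \<omega>"
    using A1 A2 by (subst AE_all_countable) (auto intro: AE_conjI)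
  then show ?thesis
  proof (rule AE_mp, intro AE_I2 impI)
    fix \<omega> assume h: "\<forall>k. pv w \<omega> \<le> c + 1 / real (Suc k) \<and> c - 1 / real (Suc k) \<le> pv w \<omega>"
    have "(\<lambda>k. c + 1 / real (Suc k)) \<longlonglongrightarrow> c + 0" by (intro tendsto_intros LIMSEQ_inverse_real_of_nat[unfolded inverse_eq_divide])
    then have l1: "pv w \<omega> \<le> c" using h by (intro LIMSEQ_le_const) auto
    have "(\<lambda>k. c - 1 / real (Suc k)) \<longlonglongrightarrow> c - 0" by (intro tendsto_intros LIMSEQ_inverse_real_of_nat[unfolded inverse_eq_divide])
    then have l2: "c \<le> pv w \<omega>" using h by (intro LIMSEQ_le_const2) auto
    show "pv w \<omega> = c" using l1 l2 by simp
  qed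
qed

end

context idm begin

lemma AE_gw_ne: assumes w: "w \<in> Zs" shows "AE \<omega> in M. g (X0 \<omega>) w \<noteq> y"
proof -
  have S: "{\<omega>\<in>space M. g (X0 \<omega>) w = y} \<in> sets M" using gw_sets[OF w, of "{y}"] by simp
  have "emeasure M {\<omega>\<in>space M. g (X0 \<omega>) w = y} = 0"
    using P_gw_pt[OF w, of y] S by (simp add: emeasure_eq_measure)
  then show ?thesis by (subst AE_iff_measurable[OF S]) auto
qed

lemma msets: "w \<in> Zs \<Longrightarrow> {\<omega>\<in>space M. P (WT (g (X0 \<omega>) w))} \<in> sets M"
  if "{x. P x} \<in> sets borel"
proof -
  assume w: "w \<in> Zs"
  have [measurable]: "(\<lambda>\<omega>. g (X0 \<omega>) w) \<in> borel_measurable M" by (rule gw_meas[OF w])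
  have [measurable]: "WT \<in> borel_measurable borel" by (rule WT_meas)
  have "(\<lambda>\<omega>. WT (g (X0 \<omega>) w)) -` {x. P x} \<inter> space M \<in> sets M"
    using that by measurable
  also have "(\<lambda>\<omega>. WT (g (X0 \<omega>) w)) -` {x. P x} \<inter> space M = {\<omega>\<in>space M. P (WT (g (X0 \<omega>) w))}" by auto
  finally show ?thesis .
qed

lemma Mcont: "continuous_on Zs (\<lambda>w. measure M {\<omega>\<in>space M. WT (g (X0 \<omega>) w) = v})"
proof (rule continuous_on_sequentiallyI)
  define J where "J = {y. WT y = v}"
  have "closed J" unfolding J_def by (rule closed_Collect_eq) (auto intro: continuous_intros WT_contin)
  then have Jb: "J \<in> sets borel" by (rule borel_closed)
  have Jint: "y \<in> J" if "y1 \<in> J" "y2 \<in> J" "y1 \<le> y" "y \<le> y2" for y y1 y2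
    using WT_mono[OF that(3)] WT_mono[OF that(4)] that(1,2) by (auto simp: J_def)
  have meq: "measure M {\<omega>\<in>space M. WT (g (X0 \<omega>) w) = v} = integral\<^sup>L M (\<lambda>\<omega>. indicator J (g (X0 \<omega>) w))"
    if w: "w \<in> Zs" for w
  proof -
    have "integral\<^sup>L M (\<lambda>\<omega>. indicator J (g (X0 \<omega>) w)) =
        integral\<^sup>L M (indicator {\<omega>\<in>space M. WT (g (X0 \<omega>) w) = v})"
      by (rule Bochner_Integration.integral_cong) (auto simp: indicator_def J_def)
    also have "\<dots> = measure M {\<omega>\<in>space M. WT (g (X0 \<omega>) w) = v}"
    proof -
      have e: "{\<omega>\<in>space M. WT (g (X0 \<omega>) w) = v} \<inter> space M = {\<omega>\<in>space M. WT (g (X0 \<omega>) w) = v}" by auto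
      show ?thesis by (simp only: Bochner_Integration.integral_indicator e)
    qed
    finally show ?thesis by simp
  qed
  fix u a assume u: "\<forall>n. u n \<in> Zs" and a: "a \<in> Zs" and ua: "u \<longlonglongrightarrow> a"
  have smeas: "(\<lambda>\<omega>. indicator J (g (X0 \<omega>) w) :: real) \<in> borel_measurable M" if "w \<in> Zs" for w
    using gw_meas[OF that] Jb by measurable
  have aemin: "AE \<omega> in M. \<not> (g (X0 \<omega>) a \<in> J \<and> (\<forall>y'\<in>J. g (X0 \<omega>) a \<le> y'))"
  proof (cases "\<exists>y0. y0 \<in> J \<and> (\<forall>y'\<in>J. y0 \<le> y')")
    case True
    then obtain y0 where y0: "y0 \<in> J" "\<forall>y'\<in>J. y0 \<le> y'" by auto
    show ?thesis using AE_gw_ne[OF a, of y0]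
      by (rule AE_mp) (intro AE_I2 impI, use y0 in \<open>auto intro: order.antisym\<close>)
  next
    case False then show ?thesis by (intro AE_I2) blast
  qed
  have aemax: "AE \<omega> in M. \<not> (g (X0 \<omega>) a \<in> J \<and> (\<forall>y'\<in>J. y' \<le> g (X0 \<omega>) a))"
  proof (cases "\<exists>y0. y0 \<in> J \<and> (\<forall>y'\<in>J. y' \<le> y0)")
    case True
    then obtain y0 where y0: "y0 \<in> J" "\<forall>y'\<in>J. y' \<le> y0" by auto
    show ?thesis using AE_gw_ne[OF a, of y0]
      by (rule AE_mp) (intro AE_I2 impI, use y0 in \<open>auto intro: order.antisym\<close>)
  next
    case False then show ?thesis by (intro AE_I2) blast
  qed
  have lim: "AE \<omega> in M. (\<lambda>i. indicator J (g (X0 \<omega>) (u i)) :: real) \<longlonglongrightarrow> indicator J (g (X0 \<omega>) a)"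
    using aemin aemax AE_space
  proof (eventually_elim)
    case (elim \<omega>)
    then have x: "X0 \<omega> \<in> Xs" using X0_range by auto
    define y where "y = g (X0 \<omega>) a"
    have yl: "(\<lambda>i. g (X0 \<omega>) (u i)) \<longlonglongrightarrow> y" unfolding y_def
      by (rule continuous_on_tendsto_compose[OF gcont_w[OF x] ua a]) (use u in auto)
    show ?case
    proof (cases "y \<in> J")
      case False
      then have "WT y \<noteq> v" by (simp add: J_def)
      moreover have "(\<lambda>i. WT (g (X0 \<omega>) (u i))) \<longlonglongrightarrow> WT y"
        by (rule isCont_tendsto_compose[OF WT_cont yl])
      ultimately have "eventually (\<lambda>i. WT (g (X0 \<omega>) (u i)) \<noteq> v) sequentially"
        by (intro tendsto_imp_eventually_ne) auto
      then have "eventually (\<lambda>i. (indicator J (g (X0 \<omega>) (u i)) :: real) = 0) sequentially"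
        by (rule eventually_mono) (simp add: J_def)
      then have "(\<lambda>i. indicator J (g (X0 \<omega>) (u i)) :: real) \<longlonglongrightarrow> 0" by (rule tendsto_eventually)
      then show ?thesis using False by (simp add: y_def)
    next
      case True
      obtain y1 where y1: "y1 \<in> J" "y1 < y" using elim(1) True by (auto simp: y_def not_le)
      obtain y2 where y2: "y2 \<in> J" "y < y2" using elim(2) True by (auto simp: y_def not_le)
      have "eventually (\<lambda>i. y1 < g (X0 \<omega>) (u i)) sequentially" by (rule order_tendstoD(1)[OF yl y1(2)])
      moreover have "eventually (\<lambda>i. g (X0 \<omega>) (u i) < y2) sequentially" by (rule order_tendstoD(2)[OF yl y2(2)])
      ultimately have "eventually (\<lambda>i. (indicator J (g (X0 \<omega>) (u i)) :: real) = 1) sequentially"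
      proof eventually_elim
        case (elim i)
        then have "g (X0 \<omega>) (u i) \<in> J" using Jint[OF y1(1) y2(1)] by (meson less_imp_le)
        then show ?case by simp
      qed
      then have "(\<lambda>i. indicator J (g (X0 \<omega>) (u i)) :: real) \<longlonglongrightarrow> 1" by (rule tendsto_eventually)
      then show ?thesis using True by (simp add: y_def)
    qed
  qed
  have "(\<lambda>i. integral\<^sup>L M (\<lambda>\<omega>. indicator J (g (X0 \<omega>) (u i)) :: real)) \<longlonglongrightarrow>
      integral\<^sup>L M (\<lambda>\<omega>. indicator J (g (X0 \<omega>) a))"
    by (rule integral_dominated_convergence[where w="\<lambda>_. 1", OF smeas[OF a] smeas[OF u[rule_format]] _ lim])
      (auto intro!: AE_I2 simp: indicator_def)
  then show "(\<lambda>n. measure M {\<omega>\<in>space M. WT (g (X0 \<omega>) (u n)) = v}) \<longlonglongrightarrow>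
      measure M {\<omega>\<in>space M. WT (g (X0 \<omega>) a) = v}"
    using meq[OF a] meq[OF u[rule_format]] by simp
qed

end

context idm begin

lemma pv_c_iff: "pv w \<omega> = c \<longleftrightarrow> WT (g (X0 \<omega>) w) = 1 - c"
  by (auto simp: pv_def pvalue_def)

lemma pv_sets: "w \<in> Zs \<Longrightarrow> {\<omega>\<in>space M. P (pv w \<omega>)} \<in> sets M" if "{x. P x} \<in> sets borel"
proof -
  assume w: "w \<in> Zs"
  have [measurable]: "pv w \<in> borel_measurable M" using w by simp
  have "pv w -` {x. P x} \<inter> space M \<in> sets M" using that by measurable
  also have "pv w -` {x. P x} \<inter> space M = {\<omega>\<in>space M. P (pv w \<omega>)}" by auto
  finally show ?thesis .
qed

definition "mm c w = measure M {\<omega>\<in>space M. pv w \<omega> = c}"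

lemma m_le_G: assumes w: "w \<in> Zs" and cs: "c \<le> s" shows "mm c w \<le> G w s"
  unfolding mm_def G_pv
  by (rule finite_measure_mono) (use cs pv_sets[OF _ w] in auto)

lemma G_plus_m: assumes w: "w \<in> Zs" and s: "s < c" and s': "c \<le> s'"
  shows "G w s + mm c w \<le> G w s'"
proof -
  have S1: "{\<omega>\<in>space M. pv w \<omega> \<le> s} \<in> sets M" by (rule pv_sets[OF _ w]) measurable
  have S2: "{\<omega>\<in>space M. pv w \<omega> = c} \<in> sets M" by (rule pv_sets[OF _ w]) measurable
  have S3: "{\<omega>\<in>space M. pv w \<omega> \<le> s'} \<in> sets M" by (rule pv_sets[OF _ w]) measurable
  have "G w s + mm c w = measure M ({\<omega>\<in>space M. pv w \<omega> \<le> s} \<union> {\<omega>\<in>space M. pv w \<omega> = c})"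
    unfolding G_pv mm_def by (rule finite_measure_Union[OF S1 S2, symmetric]) (use s in auto)
  also have "\<dots> \<le> G w s'" unfolding G_pv
    by (rule finite_measure_mono) (use s s' S3 in auto)
  finally show ?thesis .
qed

lemma mm_range: "0 \<le> mm c w" "mm c w \<le> 1" by (auto simp: mm_def)

lemma mm_good:
  assumes w: "w \<in> Zs" and c: "0 \<le> c" "c < 1" and good: "\<forall>s\<in>{0<..<(1::real)}. G w s = \<Phi> w s"
  shows "mm c w = 0"
proof (rule ccontr)
  assume "mm c w \<noteq> 0"
  then have m: "mm c w > 0" using mm_range[of c w] by auto
  obtain F where F: "continuous_on {0..1} F" "F 0 = 0" "\<And>t. t \<in> {0<..<1} \<Longrightarrow> F t = \<Phi> w t"
    using Fext[OF w] by blast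
  have GF: "G w s = F s" if "s \<in> {0<..<1}" for s using good that F(3) by auto
  have cI: "c \<in> {0..1}" using c by auto
  obtain d where d: "d > 0" "\<And>x'. x' \<in> {0..1} \<Longrightarrow> dist x' c < d \<Longrightarrow> dist (F x') (F c) < mm c w / 2"
    using F(1)[unfolded continuous_on_iff, rule_format, OF cI, of "mm c w / 2"] m by auto
  show False
  proof (cases "c = 0")
    case True
    define s where "s = min d 1 / 2"
    have s: "s \<in> {0<..<1}" "s < d" using d by (auto simp: s_def)
    have "mm c w \<le> G w s" by (rule m_le_G[OF w]) (use s True in auto)
    also have "\<dots> = F s" using GF[OF s(1)] .
    also have "F s < mm c w / 2" using d(2)[of s] s True F(2) by (auto simp: dist_real_def)
    finally show False using m by simp
  next
    case False
    then have c0: "0 < c" using c by simp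
    define \<delta> where "\<delta> = min d (min c (1 - c)) / 2"
    have \<delta>: "0 < \<delta>" "\<delta> < d" "\<delta> < c" "\<delta> < 1 - c" using d c0 c by (auto simp: \<delta>_def)
    have s1: "c - \<delta> \<in> {0<..<1}" and s2: "c + \<delta> \<in> {0<..<1}" using \<delta> c by auto
    have "G w (c - \<delta>) + mm c w \<le> G w (c + \<delta>)" by (rule G_plus_m[OF w]) (use \<delta> in auto)
    then have "F (c - \<delta>) + mm c w \<le> F (c + \<delta>)" using GF[OF s1] GF[OF s2] by simp
    moreover have "\<bar>F (c - \<delta>) - F c\<bar> < mm c w / 2" using d(2)[of "c - \<delta>"] s1 \<delta> by (auto simp: dist_real_def)
    moreover have "\<bar>F (c + \<delta>) - F c\<bar> < mm c w / 2" using d(2)[of "c + \<delta>"] s2 \<delta> by (auto simp: dist_real_def)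
    ultimately show False unfolding abs_less_iff by linarith
  qed
qed

lemma mm_one_of_AE: assumes w: "w \<in> Zs" and ae: "AE \<omega> in M. pv w \<omega> = c" shows "mm c w = 1"
proof -
  have S: "{\<omega>\<in>space M. pv w \<omega> = c} \<in> sets M" by (rule pv_sets[OF _ w]) measurable
  show ?thesis unfolding mm_def using prob_eq_1[OF S] ae by (auto elim: AE_mp intro!: AE_I2)
qed

lemma mm_bad:
  assumes w: "w \<in> Zs" and c: "0 \<le> c" "c < 1" and bad: "\<forall>s\<in>{0<..<(1::real)}. G w s = 0 \<or> G w s = 1"
  shows "mm c w = 0 \<or> mm c w = 1"
proof (rule ccontr)
  assume h: "\<not> ?thesis"
  then have m: "mm c w > 0" "mm c w < 1" using mm_range[of c w] by auto
  have up: "G w t = 1" if t: "t \<in> {c<..<1}" for t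
  proof -
    have "mm c w \<le> G w t" by (rule m_le_G[OF w]) (use t in auto)
    then show ?thesis using bad[rule_format, of t] t c m by auto
  qed
  have lo: "G w t = 0" if t: "t \<in> {0<..<c}" for t
  proof -
    have "G w t + mm c w \<le> G w ((1 + c) / 2)" by (rule G_plus_m[OF w]) (use t c in auto)
    then have "G w t < 1" using G_range[of w "(1+c)/2"] m by linarith
    then show ?thesis using bad[rule_format, of t] t c by auto
  qed
  have "AE \<omega> in M. pv w \<omega> = c" by (rule STEP[OF w c up lo])
  then have "mm c w = 1" by (rule mm_one_of_AE[OF w])
  then show False using h by simp
qed

end

context idm begin

lemma ID: assumes z: "z \<in> Zs" and t: "t \<in> {0<..<1}" shows "G z t = \<Phi> z t"
proof (rule ccontr)
  assume ne: "G z t \<noteq> \<Phi> z t"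
  have Gz1: "G z t = 1" by (rule PW(1)[OF z t ne])
  have Gz01: "\<forall>s\<in>{0<..<(1::real)}. G z s = 0 \<or> G z s = 1" by (rule PW(2)[OF z t ne])
  define C where "C = {s\<in>{0<..<(1::real)}. G z s = 1}"
  define c where "c = Inf C"
  have tC: "t \<in> C" using t Gz1 by (simp add: C_def)
  have Cne: "C \<noteq> {}" using tC by auto
  have bdd: "bdd_below C" unfolding C_def by (rule bdd_belowI[of _ 0]) auto
  have c0: "0 \<le> c" unfolding c_def using Cne by (rule cInf_greatest) (auto simp: C_def)
  have ct: "c \<le> t" unfolding c_def by (rule cInf_lower[OF tC bdd])
  have c1: "c < 1" using ct t by simp
  have up: "G z s = 1" if s: "s \<in> {c<..<1}" for s
  proof -
    have "Inf C < s" using s by (simp add: c_def)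
    then obtain s' where s': "s' \<in> C" "s' < s" using cInf_lessD[OF Cne] by blast
    have "G z s' \<le> G z s" using G_mono[OF z, of s' s] s' s by (auto simp: C_def)
    then show ?thesis using s' G_range[of z s] by (auto simp: C_def)
  qed
  have lo: "G z s = 0" if s: "s \<in> {0<..<c}" for s
  proof -
    have "G z s \<noteq> 1"
    proof
      assume "G z s = 1" then have "s \<in> C" using s c1 by (auto simp: C_def)
      then have "c \<le> s" unfolding c_def by (rule cInf_lower[OF _ bdd])
      then show False using s by simp
    qed
    then show ?thesis using Gz01 s c1 by auto
  qed
  have mz: "mm c z = 1" by (rule mm_one_of_AE[OF z STEP[OF z c0 c1 up lo]])
  have m01: "mm c w = 0 \<or> mm c w = 1" if w: "w \<in> Zs" for w
  proof (cases "\<forall>s\<in>{0<..<(1::real)}. G w s = \<Phi> w s")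
    case True then show ?thesis using mm_good[OF w c0 c1] by simp
  next
    case False
    then obtain s where s: "s \<in> {0<..<1}" "G w s \<noteq> \<Phi> w s" by auto
    show ?thesis by (rule mm_bad[OF w c0 c1 PW(2)[OF w s]])
  qed
  have mcont: "continuous_on Zs (mm c)"
  proof -
    have "continuous_on Zs (\<lambda>w. measure M {\<omega>\<in>space M. WT (g (X0 \<omega>) w) = 1 - c})" by (rule Mcont)
    moreover have "measure M {\<omega>\<in>space M. WT (g (X0 \<omega>) w) = 1 - c} = mm c w" for w
      by (simp add: mm_def pv_c_iff)
    ultimately show ?thesis by simp
  qed
  have I: "\<forall>a\<in>Zs. \<forall>b\<in>Zs. \<forall>x. a \<le> x \<and> x \<le> b \<longrightarrow> x \<in> Zs"
    using intervals(2) unfolding is_interval_1 .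
  have mall: "mm c w = 1" if w: "w \<in> Zs" for w
  proof (rule ccontr)
    assume "mm c w \<noteq> 1"
    then have m0: "mm c w = 0" using m01[OF w] by simp
    show False
    proof (cases "w \<le> z")
      case True
      have sub: "{w..z} \<subseteq> Zs" using I[rule_format, OF w z] by auto
      have "continuous_on {w..z} (mm c)" by (rule continuous_on_subset[OF mcont sub])
      then obtain x where x: "w \<le> x" "x \<le> z" "mm c x = 1/2"
        using IVT'[of "mm c" w "1/2" z] m0 mz True by auto
      then show False using m01[of x] sub by auto
    next
      case False
      have sub: "{z..w} \<subseteq> Zs" using I[rule_format, OF z w] by auto
      have "continuous_on {z..w} (mm c)" by (rule continuous_on_subset[OF mcont sub])
      then obtain x where x: "z \<le> x" "x \<le> w" "mm c x = 1/2"
        using IVT2'[of "mm c" w "1/2" z] m0 mz False by auto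
      then show False using m01[of x] sub by auto
    qed
  qed
  define t1 where "t1 = (1 + c) / 2"
  have t1: "t1 \<in> {0<..<1}" "c \<le> t1" using c0 c1 by (auto simp: t1_def)
  have "measure M {\<omega>\<in>space M. g (X0 \<omega>) w \<in> {q t1..}} = 1" if w: "w \<in> Zs" for w
  proof -
    have "mm c w \<le> G w t1" by (rule m_le_G[OF w t1(2)])
    then have "G w t1 = 1" using mall[OF w] G_range[of w t1] by simp
    then show ?thesis using G_eq[OF w t1(1)] by simp
  qed
  then have "measure M {\<omega>\<in>space M. T0 \<omega> \<in> {q t1..}} = 1" by (intro FUB) auto
  moreover have "measure M {\<omega>\<in>space M. q t1 \<le> T0 \<omega>} = t1" using P_T0_ge q_props(2)[OF t1(1)] by simp
  ultimately show False using t1 by simp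
qed

lemma ID_transfer:
  assumes z: "z \<in> Zs" and t: "t \<in> {0<..<1}"
    and X'm: "X' \<in> borel_measurable M" and X'r: "\<forall>\<omega>\<in>space M. X' \<omega> \<in> Xs"
    and X'c: "\<forall>x. WX x = measure M {\<omega>\<in>space M. X' \<omega> \<le> x}"
  shows "measure M {\<omega>\<in>space M. pvalue WT g (X' \<omega>) z \<le> t} = \<Phi> z t"
    and "{x \<in> Xs. q t \<le> g x z} \<in> sets borel"
    and "\<forall>\<omega>\<in>space M. (pvalue WT g (X' \<omega>) z \<le> t) = (X' \<omega> \<in> {x \<in> Xs. q t \<le> g x z})"
proof -
  define B where "B = {x \<in> Xs. q t \<le> g x z}"
  have "is_interval B"
    unfolding is_interval_1 B_def
  proof (intro ballI allI impI)
    fix a b x assume a: "a \<in> {x \<in> Xs. q t \<le> g x z}" and b: "b \<in> {x \<in> Xs. q t \<le> g x z}"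
      and x: "a \<le> x \<and> x \<le> b"
    have I: "\<forall>a\<in>Xs. \<forall>b\<in>Xs. \<forall>x. a \<le> x \<and> x \<le> b \<longrightarrow> x \<in> Xs"
      using intervals(1) unfolding is_interval_1 .
    have xX: "x \<in> Xs" using I a b x by blast
    have "g a z \<le> g x z" using g_le_iff[OF z _ xX, of a] a x by auto
    then show "x \<in> {x \<in> Xs. q t \<le> g x z}" using a xX by auto
  qed
  then show Bb: "{x \<in> Xs. q t \<le> g x z} \<in> sets borel" unfolding B_def by (rule real_interval_borel_measurable)
  show pvB: "\<forall>\<omega>\<in>space M. (pvalue WT g (X' \<omega>) z \<le> t) = (X' \<omega> \<in> {x \<in> Xs. q t \<le> g x z})"
    using pv_iff[OF t] X'r by auto
  have "distr M borel X' = distr M borel X0"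
  proof (rule cdf_unique)
    show "real_distribution (distr M borel X')" using X'm by simp
    show "real_distribution (distr M borel X0)" using X0_meas by simp
    show "cdf (distr M borel X') = cdf (distr M borel X0)"
    proof
      fix x
      have "cdf (distr M borel X') x = measure M (X' -` {..x} \<inter> space M)"
        unfolding cdf_def using X'm by (simp add: measure_distr)
      also have "X' -` {..x} \<inter> space M = {\<omega>\<in>space M. X' \<omega> \<le> x}" by auto
      finally show "cdf (distr M borel X') x = cdf (distr M borel X0) x"
        using X'c WX_cdf' by simp
    qed
  qed
  then have "measure (distr M borel X') B = measure (distr M borel X0) B" by simp
  then have "measure M (X' -` B \<inter> space M) = measure M (X0 -` B \<inter> space M)"
    using X'm X0_meas Bb by (simp add: measure_distr B_def)
  moreover have "X' -` B \<inter> space M = {\<omega>\<in>space M. pvalue WT g (X' \<omega>) z \<le> t}"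
    using pvB by (auto simp: B_def)
  moreover have "X0 -` B \<inter> space M = {\<omega>\<in>space M. pvalue WT g (X0 \<omega>) z \<le> t}"
    using pv_iff[OF t] X0_range by (auto simp: B_def)
  ultimately have "measure M {\<omega>\<in>space M. pvalue WT g (X' \<omega>) z \<le> t} = G z t" by (simp add: G_def)
  then show "measure M {\<omega>\<in>space M. pvalue WT g (X' \<omega>) z \<le> t} = \<Phi> z t" using ID[OF z t] by simp
qed

end


theorem theorem2p1:
  fixes M :: "'a measure" and \<alpha> \<zeta> :: real and Xs Zs Ts :: "real set"
    and g g1 :: "real \<Rightarrow> real \<Rightarrow> real" and WX WT WZ :: "real \<Rightarrow> real"
    and X :: "nat \<Rightarrow> nat \<Rightarrow> 'a \<Rightarrow> real" and Z :: "'a \<Rightarrow> real"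
    and I0 :: "nat \<Rightarrow> nat set" and z :: real
  assumes M: "prob_space M"
    and alpha: "0 < \<alpha>" "\<alpha> < 1"
    and intervals: "is_interval Xs" "is_interval Zs" "is_interval Ts"
    and g_cont: "continuous_on (Xs \<times> Zs) (\<lambda>(x, w). g x w)"
    and g_range: "\<forall>x\<in>Xs. \<forall>w\<in>Zs. g x w \<in> Ts"
    and g_mono1: "\<forall>w\<in>Zs. strict_mono_on Xs (\<lambda>x. g x w)"
    and g_mono2: "(\<forall>x\<in>Xs. strict_mono_on Zs (g x)) \<or> (\<forall>x\<in>Xs. strict_antimono_on Zs (g x))
                  \<or> (\<forall>x\<in>Xs. \<forall>w\<in>Zs. \<forall>w'\<in>Zs. g x w = g x w')"
    and g1_inv: "\<forall>x\<in>Xs. \<forall>w\<in>Zs. \<forall>t\<in>Ts. (g x w = t \<longleftrightarrow> x = g1 t w)"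
    and g2_inv: "((\<forall>x\<in>Xs. strict_mono_on Zs (g x)) \<or> (\<forall>x\<in>Xs. strict_antimono_on Zs (g x)))
                 \<longrightarrow> (\<exists>g2 :: real \<Rightarrow> real \<Rightarrow> real. \<forall>x\<in>Xs. \<forall>w\<in>Zs. \<forall>t\<in>Ts. (g x w = t \<longleftrightarrow> w = g2 x t))"
    and Z_meas: "Z \<in> borel_measurable M"
    and Z_range: "\<forall>\<omega>\<in>space M. Z \<omega> \<in> Zs"
    and WZ_cdf: "\<forall>w. WZ w = measure M {\<omega> \<in> space M. Z \<omega> \<le> w}"
    and WZ_cont: "continuous_on UNIV WZ"
    and X_meas: "\<forall>n. \<forall>i<n. X n i \<in> borel_measurable M"
    and indep: "\<forall>n. prob_space.indep_vars M (\<lambda>_. borel)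
                  (\<lambda>j. case j of None \<Rightarrow> Z | Some i \<Rightarrow> X n i) (insert None (Some ` {..<n}))"
    and I0_sub: "\<forall>n. I0 n \<subseteq> {..<n}"
    and X_true_range: "\<forall>n. \<forall>i\<in>I0 n. \<forall>\<omega>\<in>space M. X n i \<omega> \<in> Xs"
    and WX_cdf: "\<forall>n. \<forall>i\<in>I0 n. \<forall>x. WX x = measure M {\<omega> \<in> space M. X n i \<omega> \<le> x}"
    and WX_cont: "continuous_on UNIV WX"
    and WT_cdf: "\<forall>n. \<forall>i\<in>I0 n. \<forall>t. WT t = measure M {\<omega> \<in> space M. g (X n i \<omega>) (Z \<omega>) \<le> t}"
    and false_p0: "\<forall>n. \<forall>i<n. i \<notin> I0 n \<longrightarrow> (\<forall>w\<in>Zs. AE \<omega> in M. pvalue WT g (X n i \<omega>) w = 0)"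
    and Finf_ext: "\<forall>w\<in>Zs. \<exists>F. continuous_on {0..1} F \<and> F 0 = 0
                    \<and> (\<forall>t\<in>{0<..<1}. F t = Finf WX WT g1 w t)
                    \<and> (\<exists>d. (F has_real_derivative d) (at 0 within {0..1}))"
    and zeta: "0 < \<zeta>" "\<zeta> < 1"
    and zeta_lim: "(\<lambda>n. real (card (I0 n)) / real n) \<longlonglongrightarrow> \<zeta>"
    and standing: "measure M {\<omega> \<in> space M. Z \<omega> \<in> Dset \<alpha> (Finf WX WT g1) \<zeta> Zs} = 1"
    and z: "z \<in> Dset \<alpha> (Finf WX WT g1) \<zeta> Zs"
  shows "(AE \<omega> in M. (\<lambda>n. real (card (lsu_rejected \<alpha> n (\<lambda>i. pvalue WT g (X n i \<omega>) z) \<inter> I0 n))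
                          / real n)
           \<longlonglongrightarrow> tcross \<alpha> (Finf WX WT g1 z) \<zeta> / \<alpha> - (1 - \<zeta>)) \<and>
         (AE \<omega> in M. (\<lambda>n. real (card (lsu_rejected \<alpha> n (\<lambda>i. pvalue WT g (X n i \<omega>) z) \<inter> I0 n))
                          / real (max (card (lsu_rejected \<alpha> n (\<lambda>i. pvalue WT g (X n i \<omega>) z))) 1))
           \<longlonglongrightarrow> 1 - \<alpha> * (1 - \<zeta>) / tcross \<alpha> (Finf WX WT g1 z) \<zeta>)"
proof -
  interpret P: prob_space M by (rule M)
  have zZ: "z \<in> Zs" and lcp: "is_LCP \<alpha> (Finf WX WT g1 z) \<zeta>" using z by (auto simp: Dset_def)
  have "\<forall>\<^sub>F n in sequentially. 0 < real (card (I0 n)) / real n"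
    by (rule order_tendstoD(1)[OF zeta_lim zeta(1)])
  then obtain n1 where "0 < real (card (I0 n1)) / real n1" by (auto simp: eventually_sequentially)
  then have "card (I0 n1) \<noteq> 0" by (auto simp: zero_less_divide_iff)
  then have "I0 n1 \<noteq> {}" by auto
  then obtain i1 where i1: "i1 \<in> I0 n1" by auto
  have i1n1: "i1 < n1" using I0_sub i1 by auto
  define X0 where "X0 = X n1 i1"
  have indep0: "P.indep_var borel Z borel X0"
  proof -
    define f where "f b = (if b then None else Some i1)" for b :: bool
    have inj: "inj_on f UNIV" by (auto simp: f_def inj_on_def split: if_splits)
    have sub: "f ` UNIV \<subseteq> insert None (Some ` {..<n1})" using i1n1 by (auto simp: f_def)
    have "P.indep_vars (\<lambda>_. borel) (\<lambda>j. case j of None \<Rightarrow> Z | Some i \<Rightarrow> X n1 i) (f ` UNIV)"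
      by (rule P.indep_vars_subset[OF indep[rule_format, of n1] sub])
    then have h: "P.indep_vars (\<lambda>b. borel) (\<lambda>b. case f b of None \<Rightarrow> Z | Some i \<Rightarrow> X n1 i) UNIV"
      by (rule P.indep_vars_reindex[OF inj])
    have eqX: "(\<lambda>b. case f b of None \<Rightarrow> Z | Some i \<Rightarrow> X n1 i) = case_bool Z X0"
      by (auto simp: f_def X0_def fun_eq_iff split: bool.split)
    have eqM: "(\<lambda>b::bool. borel :: real measure) = case_bool borel borel"
      by (auto simp: fun_eq_iff split: bool.split)
    have "P.indep_vars (case_bool borel borel) (case_bool Z X0) UNIV"
      using h unfolding eqX eqM .
    then show ?thesis unfolding P.indep_var_def .
  qed
  have X0m: "X0 \<in> borel_measurable M" using X_meas i1n1 by (auto simp: X0_def)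
  have X0r: "\<forall>\<omega>\<in>space M. X0 \<omega> \<in> Xs" using X_true_range i1 by (auto simp: X0_def)
  have WX0: "\<forall>x. WX x = measure M {\<omega>\<in>space M. X0 \<omega> \<le> x}" using WX_cdf i1 by (auto simp: X0_def)
  have WT0: "\<forall>t. WT t = measure M {\<omega>\<in>space M. g (X0 \<omega>) (Z \<omega>) \<le> t}" using WT_cdf i1 by (auto simp: X0_def)
  interpret I: idm M Xs Zs Ts g g1 WX WT X0 Z
    by (intro idm.intro idm_axioms.intro M intervals g_cont g_range g_mono1 g1_inv Z_meas Z_range
        X0m X0r indep0 WX0 WX_cont WT0 Finf_ext)
  define F where "F = Finf WX WT g1 z"
  obtain Fx where Fx: "continuous_on {0..1} Fx" "\<And>t. t \<in> {0<..<1} \<Longrightarrow> Fx t = F t"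
    using Finf_ext zZ unfolding F_def by blast
  have "continuous_on {0<..<1} Fx" by (rule continuous_on_subset[OF Fx(1)]) auto
  then have Fcont: "continuous_on {0<..<1} F" using continuous_on_cong[of "{0<..<1}" "{0<..<1}" Fx F] Fx(2) by auto
  have Fbd: "0 \<le> F t \<and> F t \<le> 1" for t
    using I.WX_range by (auto simp: F_def Finf_def)
  have Xm: "X n i \<in> borel_measurable M" if "i \<in> I0 n" for n i using X_meas I0_sub that by auto
  have Xr: "\<forall>\<omega>\<in>space M. X n i \<omega> \<in> Xs" if "i \<in> I0 n" for n i using X_true_range that by auto
  have Xc: "\<forall>x. WX x = measure M {\<omega>\<in>space M. X n i \<omega> \<le> x}" if "i \<in> I0 n" for n i using WX_cdf that by auto
  have Bb: "{x \<in> Xs. I.q t \<le> g x z} \<in> sets borel" if t: "t \<in> {0<..<1}" for t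
    by (rule I.ID_transfer(2)[OF zZ t X0m X0r WX0])
  have finI: "finite (I0 n)" for n using I0_sub finite_subset by blast
  have cardI: "card (I0 n) \<le> n" for n using card_mono[OF _ I0_sub[rule_format, of n]] by simp
  have slln: "AE \<omega> in M. (\<lambda>n. real (card {i\<in>I0 n. pvalue WT g (X n i \<omega>) z \<le> t}) / real n) \<longlonglongrightarrow> \<zeta> * F t"
    if t: "t \<in> {0<..<1}" for t
  proof -
    define B where "B = {x \<in> Xs. I.q t \<le> g x z}"
    have B: "B \<in> sets borel" using Bb[OF t] by (simp add: B_def)
    define Y where "Y n i \<omega> = (indicator B (X n i \<omega>) :: real)" for n i \<omega>
    have indY: "P.indep_vars (\<lambda>_. borel) (Y n) (I0 n)" for n
    proof -
      have sub: "Some ` I0 n \<subseteq> insert None (Some ` {..<n})" using I0_sub by auto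
      have "P.indep_vars (\<lambda>_. borel) (\<lambda>j. case j of None \<Rightarrow> Z | Some i \<Rightarrow> X n i) (Some ` I0 n)"
        by (rule P.indep_vars_subset[OF indep[rule_format, of n] sub])
      then have "P.indep_vars (\<lambda>i. borel) (\<lambda>i. case Some i of None \<Rightarrow> Z | Some i \<Rightarrow> X n i) (I0 n)"
        by (rule P.indep_vars_reindex[OF inj_Some[THEN inj_on_subset, OF subset_UNIV]])
      then have "P.indep_vars (\<lambda>i. borel) (\<lambda>i. X n i) (I0 n)" by simp
      then have "P.indep_vars (\<lambda>i. borel) (\<lambda>i \<omega>. indicator B (X n i \<omega>) :: real) (I0 n)"
        by (rule P.indep_vars_compose2) (use B in measurable)
      then show ?thesis by (simp add: Y_def[abs_def])
    qed
    have bnd: "Y n i \<omega> \<in> {0..1}" for n i \<omega> by (simp add: Y_def indicator_def)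
    have ex: "P.expectation (Y n i) = F t" if i: "i \<in> I0 n" for n i
    proof -
      have "P.expectation (Y n i) = P.expectation (indicator (X n i -` B \<inter> space M))"
        by (rule Bochner_Integration.integral_cong) (auto simp: Y_def indicator_def)
      also have "\<dots> = measure M (X n i -` B \<inter> space M)" by simp
      also have "X n i -` B \<inter> space M = {\<omega>\<in>space M. pvalue WT g (X n i \<omega>) z \<le> t}"
        using I.ID_transfer(3)[OF zZ t Xm[OF i] Xr[OF i] Xc[OF i]] by (auto simp: B_def)
      also have "measure M \<dots> = F t"
        using I.ID_transfer(1)[OF zZ t Xm[OF i] Xr[OF i] Xc[OF i]] by (simp add: F_def)
      finally show ?thesis .
    qed
    have sl: "AE \<omega> in M. (\<lambda>n. (\<Sum>i\<in>I0 n. Y n i \<omega>) / real n - real (card (I0 n)) / real n * F t) \<longlonglongrightarrow> 0"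
      by (rule triangular_slln[OF M finI cardI indY bnd ex])
    show ?thesis using sl AE_space
    proof eventually_elim
      case (elim \<omega>)
      have sumeq: "(\<Sum>i\<in>I0 n. Y n i \<omega>) = real (card {i\<in>I0 n. pvalue WT g (X n i \<omega>) z \<le> t})" for n
      proof -
        have "(\<Sum>i\<in>I0 n. Y n i \<omega>) = (\<Sum>i\<in>I0 n. if pvalue WT g (X n i \<omega>) z \<le> t then 1 else 0)"
        proof (rule sum.cong[OF refl])
          fix i assume i: "i \<in> I0 n"
          show "Y n i \<omega> = (if pvalue WT g (X n i \<omega>) z \<le> t then 1 else 0)"
            using I.ID_transfer(3)[OF zZ t Xm[OF i] Xr[OF i] Xc[OF i]] elim(2)
            by (auto simp: Y_def B_def indicator_def)
        qed
        also have "\<dots> = (\<Sum>i\<in>{i\<in>I0 n. pvalue WT g (X n i \<omega>) z \<le> t}. 1)"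
          by (rule sum.inter_filter[symmetric, OF finI])
        also have "\<dots> = real (card {i\<in>I0 n. pvalue WT g (X n i \<omega>) z \<le> t})" by simp
        finally show ?thesis .
      qed
      have "(\<lambda>n. ((\<Sum>i\<in>I0 n. Y n i \<omega>) / real n - real (card (I0 n)) / real n * F t)
               + real (card (I0 n)) / real n * F t) \<longlonglongrightarrow> 0 + \<zeta> * F t"
        by (intro tendsto_add elim(1) tendsto_mult zeta_lim tendsto_const)
      then show ?case unfolding sumeq by simp
    qed
  qed
  have AEconv: "AE \<omega> in M. \<forall>t\<in>\<rat> \<inter> {0<..<1}.
      (\<lambda>n. real (card {i\<in>I0 n. pvalue WT g (X n i \<omega>) z \<le> t}) / real n) \<longlonglongrightarrow> \<zeta> * F t"
    by (subst AE_ball_countable) (auto intro: slln countable_rat countable_Int1)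
  have AEfalse: "AE \<omega> in M. \<forall>n i. i < n \<longrightarrow> i \<notin> I0 n \<longrightarrow> pvalue WT g (X n i \<omega>) z = 0"
  proof -
    have "AE \<omega> in M. i < n \<longrightarrow> i \<notin> I0 n \<longrightarrow> pvalue WT g (X n i \<omega>) z = 0" for n i
    proof (cases "i < n \<and> i \<notin> I0 n")
      case True
      then have "AE \<omega> in M. pvalue WT g (X n i \<omega>) z = 0" using false_p0 zZ by auto
      then show ?thesis by (rule AE_mp) (auto intro!: AE_I2)
    next
      case False then show ?thesis by (intro AE_I2) auto
    qed
    then show ?thesis by (simp add: AE_all_countable)
  qed
  have main: "AE \<omega> in M.
      ((\<lambda>n. real (card (lsu_rejected \<alpha> n (\<lambda>i. pvalue WT g (X n i \<omega>) z) \<inter> I0 n)) / real n)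
           \<longlonglongrightarrow> tcross \<alpha> (Finf WX WT g1 z) \<zeta> / \<alpha> - (1 - \<zeta>)) \<and>
      ((\<lambda>n. real (card (lsu_rejected \<alpha> n (\<lambda>i. pvalue WT g (X n i \<omega>) z) \<inter> I0 n))
                          / real (max (card (lsu_rejected \<alpha> n (\<lambda>i. pvalue WT g (X n i \<omega>) z))) 1))
           \<longlonglongrightarrow> 1 - \<alpha> * (1 - \<zeta>) / tcross \<alpha> (Finf WX WT g1 z) \<zeta>)"
    using AEconv AEfalse
  proof eventually_elim
    case (elim \<omega>)
    define p where "p n i = pvalue WT g (X n i \<omega>) z" for n i
    have convall: "(\<lambda>n. real (card {i\<in>I0 n. p n i \<le> t}) / real n) \<longlonglongrightarrow> \<zeta> * F t"
      if t: "t \<in> {0<..<1}" for t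
    proof (rule conv_extend[OF _ _ Fcont _ _ t])
      show "0 \<le> \<zeta>" "\<zeta> \<le> 1" using zeta by auto
      show "real (card {i\<in>I0 n. p n i \<le> s}) / real n \<le> real (card {i\<in>I0 n. p n i \<le> s'}) / real n"
        if "s \<le> s'" for n s s'
      proof -
        have "card {i\<in>I0 n. p n i \<le> s} \<le> card {i\<in>I0 n. p n i \<le> s'}"
          using that finI[of n] by (intro card_mono) auto
        then show ?thesis by (simp add: divide_right_mono)
      qed
      show "(\<lambda>n. real (card {i\<in>I0 n. p n i \<le> r}) / real n) \<longlonglongrightarrow> \<zeta> * F r"
        if "r \<in> \<rat>" "r \<in> {0<..<1}" for r
        using elim(1) that by (simp add: p_def)
    qed
    have pf: "p n i = 0" if "i < n" "i \<notin> I0 n" for n i using elim(2) that by (simp add: p_def)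
    have "\<And>t. t \<in> {0<..<1} \<Longrightarrow> 0 \<le> F t \<and> F t \<le> 1" using Fbd by blast
    note LA = lsu_asymp[OF alpha zeta I0_sub[rule_format] zeta_lim Fcont this pf convall lcp[folded F_def]]
    show ?case using LA unfolding p_def F_def by simp
  qed
  show ?thesis using main by (auto elim: AE_mp intro!: AE_I2)
qed

end
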